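(* For every vertex $j$ and every $t\ge0$, $\mathcal F_j(t)=\sum_{k=1}^N p_{kj}(t)\,|\alpha_{kj}(t)|^2$, and the conditional QC-distance satisfies, as $t\to0^+$, $$D_{QC}(t\,|\,j)=d_j\,t+O(t^2).$$ Consequently $D_{QC}(t)=\big(\max_j d_j\big)\,t+O(t^2)$ and $\frac1N\sum_{j=1}^N D_{QC}(t|j)=\bar d\,t+O(t^2)$ as $t\to0^+$, where $\bar d=\frac1N\sum_j d_j$ is the average degree.
   Context: $G$ is a finite simple undirected graph with vertices $\{1,\dots,N\}$, degrees $d_j$, and Laplacian $L$ ($L_{jk}=1$ if $j\ne k$ adjacent, $0$ if $j\ne k$ non-adjacent, $L_{jj}=-d_j$). Let $p_{kj}(t)=\langle k|e^{Lt}|j\rangle$ and $\alpha_{kj}(t)=\langle k|e^{iLt}|j\rangle$. For $\rho_j=|j\rangle\langle j|$, $\mathcal E_{\mathrm C}(\rho_j)=\sum_k p_{kj}(t)|k\rangle\langle k|$ and $\mathcal E_{\mathrm Q}(\rho_j)=|\psi_j(t)\rangle\langle\psi_j(t)|$ with $|\psi_j(t)\rangle=\sum_k\alpha_{kj}(t)|k\rangle$. $\mathcal F_j(t)=\mathcal F(\mathcal E_{\mathrm C}(\rho_j),\mathcal E_{\mathrm Q}(\rho_j))$ with Uhlmann fidelity $\mathcal F(\rho_1,\rho_2)=[\mathrm{Tr}\sqrt{\sqrt{\rho_1}\rho_2\sqrt{\rho_1}}]^2$, and $D_{QC}(t|j)=1-\mathcal F_j(t)$. The QC-distance is $D_{QC}(t)=1-\min_{\rho_{\mathrm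 C}}\mathcal F(\mathcal E_{\mathrm C}(\rho_{\mathrm C}),\mathcal E_{\mathrm Q}(\rho_{\mathrm C}))$ over diagonal density matrices, where $\mathcal E_{\mathrm C}(\rho)=\sum_k(\sum_j p_{kj}(t)\rho_{jj})|k\rangle\langle k|$ and $\mathcal E_{\mathrm Q}(\rho)=e^{iLt}\rho e^{-iLt}$. *)

theory Defs
  imports "HOL-Analysis.Analysis" "HOL-Library.Landau_Symbols"
begin

(* Simple undirected graph on the finite vertex type 'n (N = CARD('n)),
   given by a symmetric irreflexive adjacency relation E. *)
definition simple_graph :: "('n::finite \<Rightarrow> 'n \<Rightarrow> bool) \<Rightarrow> bool" where
  "simple_graph E \<longleftrightarrow> (\<forall>j k. E j k = E k j) \<and> (\<forall>j. \<not> E j j)"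

definition degree :: "('n::finite \<Rightarrow> 'n \<Rightarrow> bool) \<Rightarrow> 'n \<Rightarrow> nat" where
  "degree E j = card {k. E j k}"

definition laplacian :: "('n::finite \<Rightarrow> 'n \<Rightarrow> bool) \<Rightarrow> real^'n^'n" where
  "laplacian E = (\<chi> j k. if j = k then - real (degree E j) else if E j k then 1 else 0)"

primrec mpow :: "'a::semiring_1^'n^'n \<Rightarrow> nat \<Rightarrow> 'a^'n^'n" where
  "mpow A 0 = mat 1"
| "mpow A (Suc m) = A ** mpow A m"

definition mexp :: "'a::{real_normed_field,banach}^'n^'n \<Rightarrow> 'a^'n^'n" where
  "mexp A = (\<chi> i j. \<Sum>m. (mpow A m $ i $ j) / fact m)"

definition pC :: "('n::finite \<Rightarrow> 'n \<Rightarrow> bool) \<Rightarrow> real \<Rightarrow> 'n \<Rightarrow> 'n \<Rightarrow> real" where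
  "pC E t k j = mexp (t *\<^sub>R laplacian E) $ k $ j"

definition UQ :: "('n::finite \<Rightarrow> 'n \<Rightarrow> bool) \<Rightarrow> real \<Rightarrow> complex^'n^'n" where
  "UQ E t = mexp (\<chi> i j. \<i> * complex_of_real t * complex_of_real (laplacian E $ i $ j))"

definition alphaQ :: "('n::finite \<Rightarrow> 'n \<Rightarrow> bool) \<Rightarrow> real \<Rightarrow> 'n \<Rightarrow> 'n \<Rightarrow> complex" where
  "alphaQ E t k j = UQ E t $ k $ j"

definition adjointM :: "complex^'n^'n \<Rightarrow> complex^'n^'n" where
  "adjointM A = (\<chi> i j. cnj (A $ j $ i))"

definition psd :: "complex^'n::finite^'n \<Rightarrow> bool" where
  "psd A \<longleftrightarrow> adjointM A = A \<and>
     (\<forall>v :: complex^'n. 0 \<le> Re (\<Sum>i\<in>UNIV. \<Sum>j\<in>UNIV. cnj (v $ i) * A $ i $ j * v $ j))"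

definition psd_sqrt :: "complex^'n::finite^'n \<Rightarrow> complex^'n^'n" where
  "psd_sqrt A = (THE S. psd S \<and> S ** S = A)"

definition fidelity :: "complex^'n::finite^'n \<Rightarrow> complex^'n^'n \<Rightarrow> real" where
  "fidelity r1 r2 = (Re (trace (psd_sqrt (psd_sqrt r1 ** r2 ** psd_sqrt r1)))) ^ 2"

definition diagM :: "('n::finite \<Rightarrow> complex) \<Rightarrow> complex^'n^'n" where
  "diagM f = (\<chi> i j. if i = j then f i else 0)"

definition ECl :: "('n::finite \<Rightarrow> 'n \<Rightarrow> bool) \<Rightarrow> real \<Rightarrow> ('n \<Rightarrow> real) \<Rightarrow> complex^'n^'n" where
  "ECl E t q = diagM (\<lambda>k. complex_of_real (\<Sum>j\<in>UNIV. pC E t k j * q j))"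

definition EQu :: "('n::finite \<Rightarrow> 'n \<Rightarrow> bool) \<Rightarrow> real \<Rightarrow> complex^'n^'n \<Rightarrow> complex^'n^'n" where
  "EQu E t rho = UQ E t ** rho ** adjointM (UQ E t)"

(* E_C(rho_j) and E_Q(rho_j) = |psi_j(t)><psi_j(t)| as in the paper *)
definition ECj :: "('n::finite \<Rightarrow> 'n \<Rightarrow> bool) \<Rightarrow> real \<Rightarrow> 'n \<Rightarrow> complex^'n^'n" where
  "ECj E t j = diagM (\<lambda>k. complex_of_real (pC E t k j))"

definition EQj :: "('n::finite \<Rightarrow> 'n \<Rightarrow> bool) \<Rightarrow> real \<Rightarrow> 'n \<Rightarrow> complex^'n^'n" where
  "EQj E t j = (\<chi> k l. alphaQ E t k j * cnj (alphaQ E t l j))"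

definition Fj :: "('n::finite \<Rightarrow> 'n \<Rightarrow> bool) \<Rightarrow> real \<Rightarrow> 'n \<Rightarrow> real" where
  "Fj E t j = fidelity (ECj E t j) (EQj E t j)"

definition DQC_cond :: "('n::finite \<Rightarrow> 'n \<Rightarrow> bool) \<Rightarrow> real \<Rightarrow> 'n \<Rightarrow> real" where
  "DQC_cond E t j = 1 - Fj E t j"

(* diagonal density matrices, parametrised by their diagonal q (q \<ge> 0, sum q = 1) *)
definition prob_vecs :: "('n::finite \<Rightarrow> real) set" where
  "prob_vecs = {q. (\<forall>j. 0 \<le> q j) \<and> (\<Sum>j\<in>UNIV. q j) = 1}"

definition DQC :: "('n::finite \<Rightarrow> 'n \<Rightarrow> bool) \<Rightarrow> real \<Rightarrow> real" where
  "DQC E t = 1 - (INF q\<in>prob_vecs. fidelity (ECl E t q)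
                     (EQu E t (diagM (\<lambda>j. complex_of_real (q j)))))"

end

theory Submission
  imports Defs
begin


definition cinner :: "complex^'n::finite \<Rightarrow> complex^'n \<Rightarrow> complex" where
  "cinner x y = (\<Sum>i\<in>UNIV. cnj (x$i) * y$i)"

definition outer :: "complex^'n::finite \<Rightarrow> complex^'n \<Rightarrow> complex^'n^'n" where
  "outer x y = (\<chi> i j. x$i * cnj (y$j))"

lemma cinner_add_right: "cinner x (y + z) = cinner x y + cinner x z"
  by (simp add: cinner_def distrib_left sum.distrib)
lemma cinner_add_left: "cinner (x + y) z = cinner x z + cinner y z"
  by (simp add: cinner_def distrib_right sum.distrib)
lemma cinner_diff_right: "cinner x (y - z) = cinner x y - cinner x z"
  by (simp add: cinner_def right_diff_distrib sum_subtractf)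
lemma cinner_diff_left: "cinner (x - y) z = cinner x z - cinner y z"
  by (simp add: cinner_def left_diff_distrib sum_subtractf)
lemma cinner_scale_right: "cinner x (c *s y) = c * cinner x y"
  by (simp add: cinner_def sum_distrib_left algebra_simps)
lemma cinner_scale_left: "cinner (c *s x) y = cnj c * cinner x y"
  by (simp add: cinner_def sum_distrib_left algebra_simps)
lemma cinner_zero_right[simp]: "cinner x 0 = 0" by (simp add: cinner_def)
lemma cinner_zero_left[simp]: "cinner 0 x = 0" by (simp add: cinner_def)
lemma cinner_commute: "cinner y x = cnj (cinner x y)"
  by (simp add: cinner_def mult.commute)
lemma cinner_sum_right: "cinner x (sum f S) = (\<Sum>s\<in>S. cinner x (f s))"
  by (induction S rule: infinite_finite_induct) (auto simp: cinner_add_right)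
lemma cinner_sum_left: "cinner (sum f S) x = (\<Sum>s\<in>S. cinner (f s) x)"
  by (induction S rule: infinite_finite_induct) (auto simp: cinner_add_left)

lemma inner_cinner: "inner x y = Re (cinner x y)"
  by (simp add: inner_vec_def cinner_def inner_complex_def Re_sum)

lemma norm_vec_sq: "(norm (x::complex^'n::finite))^2 = (\<Sum>i\<in>UNIV. (cmod (x$i))^2)"
  by (simp add: power2_norm_eq_inner inner_vec_def)

lemma cinner_self: "cinner x x = complex_of_real ((norm x)^2)"
proof -
  have "cinner x x = (\<Sum>i\<in>UNIV. complex_of_real ((cmod (x$i))^2))"
    unfolding cinner_def
  proof (intro sum.cong refl)
    fix i show "cnj (x $ i) * x $ i = complex_of_real ((cmod (x $ i))\<^sup>2)"
      using complex_norm_square[of "x$i"] by (simp add: mult.commute)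
  qed
  also have "\<dots> = complex_of_real ((norm x)^2)"
    by (simp add: norm_vec_sq)
  finally show ?thesis .
qed

lemma cinner_self_eq0: "cinner x x = 0 \<longleftrightarrow> x = 0"
  by (simp add: cinner_self)

lemma cinner_cs: "cmod (cinner x y) \<le> norm x * norm y"
proof (cases "cinner x y = 0")
  case True then show ?thesis by simp
next
  case False
  define c where "c = cnj (cinner x y) / cmod (cinner x y)"
  have cm: "cmod c = 1" using False by (simp add: c_def norm_divide)
  have "cinner x (c *s y) = complex_of_real (cmod (cinner x y))"
  proof -
    have "cnj (cinner x y) * cinner x y = complex_of_real (cmod (cinner x y)) * complex_of_real (cmod (cinner x y))"
      by (metis complex_norm_square mult.commute of_real_mult power2_eq_square)
    thus ?thesis using False by (simp add: cinner_scale_right c_def)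
  qed
  hence "cmod (cinner x y) = inner x (c *s y)" by (simp add: inner_cinner)
  also have "\<dots> \<le> norm x * norm (c *s y)" by (rule norm_cauchy_schwarz)
  also have "norm (c *s y) = norm y"
  proof -
    have "(norm (c *s y))^2 = (norm y)^2"
      unfolding norm_vec_sq using cm by (simp add: norm_mult power_mult_distrib)
    thus ?thesis by (simp add: power2_eq_iff_nonneg)
  qed
  finally show ?thesis .
qed



abbreviation ax :: "'n::finite \<Rightarrow> complex^'n" where "ax k \<equiv> axis k 1"

lemma mv_axis: "(A *v ax k) $ i = A $ i $ k"
  by (simp add: matrix_vector_mult_def axis_def if_distrib cong: if_cong)

lemma mat_zero_by_axis: "(\<And>k. (A::complex^'n::finite^'n) *v ax k = 0) \<Longrightarrow> A = 0"
  by (metis mv_axis vec_eq_iff zero_index)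

lemma adjointM_cinner: "cinner x (A *v y) = cinner (adjointM A *v x) y"
  unfolding cinner_def adjointM_def matrix_vector_mult_def
  by (simp add: sum_distrib_left sum_distrib_right cnj_sum algebra_simps) (rule sum.swap)

lemma adjointM_adjointM[simp]: "adjointM (adjointM A) = A"
  by (simp add: adjointM_def vec_eq_iff)

lemma adjointM_mult: "adjointM (A ** B) = adjointM B ** adjointM A"
  by (simp add: adjointM_def matrix_matrix_mult_def vec_eq_iff cnj_sum mult.commute)

lemma psd_form: "(\<Sum>i\<in>UNIV. \<Sum>j\<in>UNIV. cnj (v $ i) * A $ i $ j * v $ j) = cinner v (A *v v)"
  by (simp add: cinner_def matrix_vector_mult_def sum_distrib_left mult.assoc)

lemma psdD: "psd A \<Longrightarrow> 0 \<le> Re (cinner v (A *v v))"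
  unfolding psd_def psd_form by blast

lemma psd_herm: "psd A \<Longrightarrow> adjointM A = A" unfolding psd_def by blast

lemma psdI: "adjointM A = A \<Longrightarrow> (\<And>v. 0 \<le> Re (cinner v (A *v v))) \<Longrightarrow> psd A"
  unfolding psd_def psd_form by blast

lemma herm_form_real: "adjointM A = A \<Longrightarrow> Im (cinner v (A *v v)) = 0"
proof -
  assume h: "adjointM A = A"
  have "cinner v (A *v v) = cinner (A *v v) v" using adjointM_cinner[of v A v] h by simp
  also have "\<dots> = cnj (cinner v (A *v v))" by (rule cinner_commute)
  finally have "Im (cinner v (A *v v)) = Im (cnj (cinner v (A *v v)))" by simp
  thus ?thesis by simp
qed

lemma quad_zero:
  fixes a b :: real
  assumes "\<And>s. 0 \<le> 2 * s * a + s^2 * b"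
  shows "a = 0"
proof (rule ccontr)
  assume a: "a \<noteq> 0"
  define s where "s = - a / (\<bar>b\<bar> + 1)"
  have bp: "\<bar>b\<bar> + 1 > 0" by simp
  have "2 * s * a + s^2 * b \<le> 2 * s * a + s^2 * (\<bar>b\<bar> + 1)"
    by (intro add_left_mono mult_left_mono) auto
  also have "\<dots> = - (a^2) / (\<bar>b\<bar> + 1)"
  proof -
    have e: "s * (\<bar>b\<bar> + 1) = - a" using bp by (simp add: s_def)
    have "2 * s * a + s^2 * (\<bar>b\<bar> + 1) = s * a + s * (a + s * (\<bar>b\<bar> + 1))"
      by (simp add: algebra_simps power2_eq_square)
    also have "\<dots> = s * a" using e by (simp add: mult.assoc)
    also have "\<dots> = - (a^2) / (\<bar>b\<bar> + 1)" by (simp add: s_def power2_eq_square)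
    finally show ?thesis .
  qed
  also have "\<dots> < 0" using a bp by (simp add: divide_neg_pos)
  finally show False using assms[of s] by linarith
qed

lemma psd_kernel:
  assumes "psd A" "Re (cinner u (A *v u)) = 0"
  shows "A *v u = 0"
proof -
  have h: "adjointM A = A" using assms psd_herm by blast
  have key: "Re (cinner w (A *v u)) = 0" for w
  proof (rule quad_zero)
    fix s :: real
    have "0 \<le> Re (cinner (u + complex_of_real s *s w) (A *v (u + complex_of_real s *s w)))"
      using psdD[OF assms(1)] by blast
    also have "cinner (u + complex_of_real s *s w) (A *v (u + complex_of_real s *s w))
       = cinner u (A *v u) + of_real s * cinner u (A *v w) + of_real s * cinner w (A *v u)
         + of_real s * of_real s * cinner w (A *v w)"
    proof -
      have mv: "A *v (complex_of_real s *s w) = complex_of_real s *s (A *v w)"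
        by (simp add: vec_eq_iff matrix_vector_mult_def vector_scalar_mult_def sum_distrib_left algebra_simps)
      show ?thesis
        unfolding matrix_vector_right_distrib mv cinner_add_left cinner_add_right
          cinner_scale_left cinner_scale_right by (simp add: algebra_simps)
    qed
    also have "cinner u (A *v w) = cnj (cinner w (A *v u))"
      using adjointM_cinner[of u A w] h cinner_commute by metis
    finally show "0 \<le> 2 * s * Re (cinner w (A *v u)) + s^2 * Re (cinner w (A *v w))"
      using assms(2) by (simp add: power2_eq_square)
  qed
  have "Re (cinner (A *v u) (A *v u)) = 0" by (rule key)
  hence "cinner (A *v u) (A *v u) = 0" by (simp add: cinner_self)
  thus ?thesis using cinner_self_eq0 by blast
qed

lemma cinner_axis: "cinner (ax k) y = y $ k"
proof -
  have "cinner (ax k) y = (\<Sum>i\<in>UNIV. if i = k then y $ i else 0)"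
    unfolding cinner_def by (intro sum.cong refl) (simp add: axis_def)
  thus ?thesis by simp
qed

lemma trace_cinner: "trace A = (\<Sum>k\<in>UNIV. cinner (ax k) (A *v ax k))"
  unfolding trace_def cinner_axis mv_axis ..

lemma cinner_herm_sandwich:
  "adjointM D = D \<Longrightarrow> cinner (D *v x) (B *v (D *v x)) = cinner x ((D ** B ** D) *v x)"
  by (metis adjointM_cinner matrix_vector_mul_assoc)

lemma mat_sub_ldistrib: "(A::complex^'n::finite^'n) ** (B - C) = A ** B - A ** C"
  by (simp add: matrix_matrix_mult_def vec_eq_iff right_diff_distrib sum_subtractf)
lemma mat_sub_rdistrib: "((A::complex^'n::finite^'n) - B) ** C = A ** C - B ** C"
  by (simp add: matrix_matrix_mult_def vec_eq_iff left_diff_distrib sum_subtractf)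
lemma mat_add_rdistrib: "((A::complex^'n::finite^'n) + B) ** C = A ** C + B ** C"
  by (simp add: matrix_matrix_mult_def vec_eq_iff distrib_right sum.distrib)

lemma adjointM_diff: "adjointM (A - B) = adjointM A - adjointM B"
  by (simp add: adjointM_def vec_eq_iff)

lemma psd_sqrt_unique:
  assumes S: "psd S" and T: "psd T" and eq: "S ** S = T ** T"
  shows "S = T"
proof -
  define D where "D = S - T"
  have hS: "adjointM S = S" and hT: "adjointM T = T" using S T psd_herm by auto
  have hD: "adjointM D = D" by (simp add: D_def adjointM_diff hS hT)
  have sum0: "S ** D + D ** T = 0"
    by (simp add: D_def mat_sub_ldistrib mat_sub_rdistrib eq)
  define a where "a k = Re (cinner (D *v ax k) (S *v (D *v ax k)))" for k
  define b where "b k = Re (cinner (D *v ax k) (T *v (D *v ax k)))" for k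
  have a0: "a k \<ge> 0" for k unfolding a_def using psdD[OF S] by blast
  have b0: "b k \<ge> 0" for k unfolding b_def using psdD[OF T] by blast
  have "(\<Sum>k\<in>UNIV. a k) = Re (trace (D ** S ** D))"
    unfolding a_def trace_cinner Re_sum using cinner_herm_sandwich[OF hD] by simp
  moreover have "(\<Sum>k\<in>UNIV. b k) = Re (trace (D ** T ** D))"
    unfolding b_def trace_cinner Re_sum using cinner_herm_sandwich[OF hD] by simp
  moreover have "trace (D ** T ** D) = trace (D ** (D ** T))"
    by (metis matrix_mul_assoc trace_mul_sym)
  moreover have "trace (D ** S ** D) + trace (D ** (D ** T)) = 0"
  proof -
    have "D ** S ** D + D ** (D ** T) = D ** (S ** D + D ** T)"
      by (simp add: matrix_add_ldistrib matrix_mul_assoc)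
    also have "\<dots> = 0" unfolding sum0 by (simp add: matrix_matrix_mult_def vec_eq_iff)
    finally have "trace (D ** S ** D + D ** (D ** T)) = 0" by (simp add: trace_def)
    thus ?thesis by (simp add: trace_add)
  qed
  ultimately have "(\<Sum>k\<in>UNIV. a k) + (\<Sum>k\<in>UNIV. b k) = 0"
  proof -
    assume a1: "(\<Sum>k\<in>UNIV. a k) = Re (trace (D ** S ** D))"
      and a2: "(\<Sum>k\<in>UNIV. b k) = Re (trace (D ** T ** D))"
      and a3: "trace (D ** T ** D) = trace (D ** (D ** T))"
      and a4: "trace (D ** S ** D) + trace (D ** (D ** T)) = 0"
    have "Re (trace (D ** S ** D) + trace (D ** (D ** T))) = 0" using a4 by simp
    thus ?thesis using a1 a2 a3 by simp
  qed
  hence "(\<Sum>k\<in>UNIV. a k + b k) = 0" by (simp add: sum.distrib)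
  hence ab: "a k + b k = 0" for k
    using sum_nonneg_eq_0_iff[of UNIV "\<lambda>k. a k + b k"] a0 b0 by (simp add: add_nonneg_nonneg)
  have SD: "S ** D = 0"
  proof (rule mat_zero_by_axis)
    fix k have "a k = 0" using ab a0 b0 by (meson add_nonneg_eq_0_iff)
    hence "S *v (D *v ax k) = 0" using psd_kernel[OF S, of "D *v ax k"] unfolding a_def by blast
    thus "S ** D *v ax k = 0" by (simp add: matrix_vector_mul_assoc)
  qed
  have TD: "T ** D = 0"
  proof (rule mat_zero_by_axis)
    fix k have "b k = 0" using ab a0 b0 by (meson add_nonneg_eq_0_iff)
    hence "T *v (D *v ax k) = 0" using psd_kernel[OF T, of "D *v ax k"] unfolding b_def by blast
    thus "T ** D *v ax k = 0" by (simp add: matrix_vector_mul_assoc)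
  qed
  have DD: "D ** D = 0" using SD TD by (simp add: D_def mat_sub_rdistrib)
  have "D = 0"
  proof (rule mat_zero_by_axis)
    fix k
    have "cinner (D *v ax k) (D *v ax k) = cinner (ax k) ((D ** D) *v ax k)"
      using adjointM_cinner[of "ax k" D "D *v ax k"] hD by (simp add: matrix_vector_mul_assoc)
    also have "\<dots> = 0" using DD by simp
    finally show "D *v ax k = 0" using cinner_self_eq0 by blast
  qed
  thus ?thesis by (simp add: D_def)
qed

lemma psd_sqrt_eq:
  assumes "psd S" "S ** S = A"
  shows "psd_sqrt A = S"
  unfolding psd_sqrt_def
  by (rule the_equality) (use assms psd_sqrt_unique in auto)



lemma mv_scale: "A *v (c *s x) = c *s (A *v (x::complex^'n::finite))"
  by (simp add: vec_eq_iff matrix_vector_mult_def vector_scalar_mult_def sum_distrib_left algebra_simps)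

lemma quad_expand:
  "cinner (u + complex_of_real s *s w) (A *v (u + complex_of_real s *s w))
       = cinner u (A *v u) + of_real s * cinner u (A *v w) + of_real s * cinner w (A *v u)
         + of_real s * of_real s * cinner w (A *v w)"
  unfolding matrix_vector_right_distrib mv_scale cinner_add_left cinner_add_right
          cinner_scale_left cinner_scale_right by (simp add: algebra_simps)

lemma cinner_expand:
  "cinner (u + complex_of_real s *s w) (u + complex_of_real s *s w)
       = cinner u u + of_real s * cinner u w + of_real s * cinner w u
         + of_real s * of_real s * cinner w w"
  unfolding cinner_add_left cinner_add_right
          cinner_scale_left cinner_scale_right by (simp add: algebra_simps)

lemma norm_scale: "norm (c *s (x::complex^'n::finite)) = cmod c * norm x"
proof -
  have "(norm (c *s x))^2 = (cmod c * norm x)^2"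
    by (simp add: norm_vec_sq[of "c *s x"] norm_vec_sq[of x] norm_mult power_mult_distrib sum_distrib_left)
  thus ?thesis by (simp add: power2_eq_iff_nonneg)
qed

definition eigsys :: "complex^'n::finite^'n \<Rightarrow> (complex^'n) set \<Rightarrow> bool" where
  "eigsys A V \<longleftrightarrow> finite V \<and>
     (\<forall>v\<in>V. cinner v v = 1 \<and> A *v v = complex_of_real (Re (cinner v (A *v v))) *s v) \<and>
     (\<forall>v\<in>V. \<forall>w\<in>V. v \<noteq> w \<longrightarrow> cinner v w = 0)"

lemma eigsys_card:
  fixes V :: "(complex^'n::finite) set"
  assumes e: "eigsys A V"
  shows "card V \<le> DIM(complex^'n)"
proof -
  have "pairwise orthogonal V"
    using e unfolding eigsys_def pairwise_def orthogonal_def by (simp add: inner_cinner)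
  moreover have "0 \<notin> V" using e unfolding eigsys_def by force
  ultimately have "independent V" by (rule pairwise_orthogonal_independent)
  thus ?thesis using independent_bound by blast
qed

lemma cont_cinner: "continuous_on UNIV (\<lambda>x. cinner v (x::complex^'n::finite))"
  unfolding cinner_def by (intro continuous_intros)

lemma cont_quad: "continuous_on UNIV (\<lambda>x. Re (cinner x (A *v (x::complex^'n::finite))))"
  unfolding cinner_def matrix_vector_mult_def by (intro continuous_intros)

lemma spectral_aux:
  fixes A :: "complex^'n::finite^'n"
  assumes h: "adjointM A = A"
  shows "eigsys A V0 \<Longrightarrow> DIM(complex^'n) - card V0 = m \<Longrightarrow>
         \<exists>V. eigsys A V \<and> (\<forall>x. (\<forall>v\<in>V. cinner v x = 0) \<longrightarrow> x = 0)"
proof (induction m arbitrary: V0 rule: less_induct)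
  case (less m V0)
  note e0 = less.prems(1)
  show ?case
  proof (cases "\<forall>x. (\<forall>v\<in>V0. cinner v x = 0) \<longrightarrow> x = 0")
    case True then show ?thesis using e0 by blast
  next
    case False
    define W where "W = {x::complex^'n. \<forall>v\<in>V0. cinner v x = 0}"
    obtain x0 where x0W: "x0 \<in> W" and x0: "x0 \<noteq> 0" using False W_def by blast
    have Wscale: "c *s x \<in> W" if "x \<in> W" for c x
      using that unfolding W_def by (simp add: cinner_scale_right)
    have Wadd: "x + y \<in> W" if "x \<in> W" "y \<in> W" for x y
      using that unfolding W_def by (simp add: cinner_add_right)
    have Wdiff: "x - y \<in> W" if "x \<in> W" "y \<in> W" for x y
      using that unfolding W_def by (simp add: cinner_diff_right)
    have WA: "A *v x \<in> W" if "x \<in> W" for x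
    proof -
      { fix v assume v: "v \<in> V0"
        have "cinner v (A *v x) = cinner (A *v v) x" using adjointM_cinner[of v A x] h by simp
        also have "A *v v = complex_of_real (Re (cinner v (A *v v))) *s v"
          using e0 v unfolding eigsys_def by blast
        also have "cinner (complex_of_real (Re (cinner v (A *v v))) *s v) x = 0"
          using v that unfolding W_def by (simp add: cinner_scale_left)
        finally have "cinner v (A *v x) = 0" . }
      thus ?thesis unfolding W_def by blast
    qed
    define K where "K = W \<inter> sphere 0 1"
    have closedW: "closed W"
    proof -
      have "W = (\<Inter>v\<in>V0. {x. cinner v x = 0})" unfolding W_def by blast
      moreover have "closed {x. cinner v x = (0::complex)}" for v :: "complex^'n"
        using continuous_closed_preimage_constant[OF cont_cinner[of v] closed_UNIV] by simp
      ultimately show ?thesis by auto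
    qed
    have compK: "compact K"
    proof -
      have "compact (sphere (0::complex^'n) 1 \<inter> W)" by (rule compact_Int_closed[OF compact_sphere closedW])
      thus ?thesis unfolding K_def by (simp add: Int_commute)
    qed
    define y0 where "y0 = complex_of_real (1 / norm x0) *s x0"
    have "y0 \<in> K" unfolding K_def y0_def using x0 x0W Wscale by (simp add: norm_scale norm_divide)
    hence "K \<noteq> {}" by blast
    then obtain u where uK: "u \<in> K" and umax: "\<And>y. y \<in> K \<Longrightarrow> Re (cinner y (A *v y)) \<le> Re (cinner u (A *v u))"
      using continuous_attains_sup[OF compK _ continuous_on_subset[OF cont_quad[of A] subset_UNIV]]
      by blast
    define lam where "lam = Re (cinner u (A *v u))"
    have uW: "u \<in> W" and un: "norm u = 1" using uK K_def by auto
    have uu: "cinner u u = 1" using un by (simp add: cinner_self)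
    have bound: "Re (cinner y (A *v y)) \<le> lam * (norm y)^2" if yW: "y \<in> W" for y
    proof (cases "y = 0")
      case True then show ?thesis by simp
    next
      case False
      define c where "c = complex_of_real (1 / norm y)"
      have "c *s y \<in> K" unfolding K_def c_def using False yW Wscale by (simp add: norm_scale norm_divide)
      hence "Re (cinner (c *s y) (A *v (c *s y))) \<le> lam" using umax lam_def by blast
      moreover have "cinner (c *s y) (A *v (c *s y)) = complex_of_real ((1 / norm y)^2) * cinner y (A *v y)"
        by (simp add: mv_scale cinner_scale_left cinner_scale_right c_def power2_eq_square)
      ultimately have "(1 / norm y)^2 * Re (cinner y (A *v y)) \<le> lam" by simp
      hence "Re (cinner y (A *v y)) \<le> lam * (norm y)^2" using False
        by (simp add: field_simps)
      thus ?thesis .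
    qed
    define g where "g = A *v u - complex_of_real lam *s u"
    have gW: "g \<in> W" unfolding g_def using uW WA Wscale Wdiff by blast
    have Auu: "cinner u (A *v u) = complex_of_real lam"
      using herm_form_real[OF h, of u] lam_def by (simp add: complex_eq_iff)
    have ug: "cinner u g = 0" unfolding g_def by (simp add: cinner_diff_right cinner_scale_right uu Auu)
    have gu: "cinner g u = 0" using ug cinner_commute[of g u] by simp
    have gAu: "cinner g (A *v u) = cinner g g"
    proof -
      have "A *v u = g + complex_of_real lam *s u" by (simp add: g_def)
      thus ?thesis by (simp add: cinner_add_right cinner_scale_right gu)
    qed
    have uAg: "cinner u (A *v g) = cinner g g"
    proof -
      have "cinner u (A *v g) = cinner (A *v u) g" using adjointM_cinner[of u A g] h by simp
      also have "A *v u = g + complex_of_real lam *s u" by (simp add: g_def)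
      finally show ?thesis by (simp add: cinner_add_left cinner_scale_left ug)
    qed
    have "Re (cinner g g) = 0"
    proof (rule quad_zero)
      fix s :: real
      have yW: "u + complex_of_real (-s) *s g \<in> W" using uW gW Wscale Wadd by blast
      have "Re (cinner (u + complex_of_real (-s) *s g) (A *v (u + complex_of_real (-s) *s g)))
            \<le> lam * (norm (u + complex_of_real (-s) *s g))^2" using bound[OF yW] .
      moreover have "(norm (u + complex_of_real (-s) *s g))^2 = Re (cinner (u + complex_of_real (-s) *s g) (u + complex_of_real (-s) *s g))"
        by (simp add: cinner_self)
      ultimately have "Re (cinner u (A *v u) + of_real (-s) * cinner u (A *v g) + of_real (-s) * cinner g (A *v u)
         + of_real (-s) * of_real (-s) * cinner g (A *v g)) \<le> lam * Re (cinner u u + of_real (-s) * cinner u g + of_real (-s) * cinner g u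
         + of_real (-s) * of_real (-s) * cinner g g)"
        unfolding quad_expand cinner_expand by simp
      hence "lam - 2 * s * Re (cinner g g) + s * s * Re (cinner g (A *v g)) \<le> lam * (1 + s * s * Re (cinner g g))"
        by (simp add: Auu uAg gAu uu ug gu)
      thus "0 \<le> 2 * s * Re (cinner g g) + s^2 * (lam * Re (cinner g g) - Re (cinner g (A *v g)))"
        by (simp add: algebra_simps power2_eq_square)
    qed
    hence "cinner g g = 0" by (simp add: cinner_self)
    hence g0: "g = 0" using cinner_self_eq0 by blast
    hence Au: "A *v u = complex_of_real (Re (cinner u (A *v u))) *s u" by (simp add: g_def lam_def)
    have uV0: "u \<notin> V0" using uW uu unfolding W_def by force
    define V1 where "V1 = insert u V0"
    have e1: "eigsys A V1"
    proof -
      have orth: "cinner v u = 0 \<and> cinner u v = 0" if "v \<in> V0" for v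
        using uW that unfolding W_def using cinner_commute[of u v] by auto
      show ?thesis using e0 orth uu Au unfolding eigsys_def V1_def by auto
    qed
    have "card V1 = Suc (card V0)" using uV0 e0 unfolding V1_def eigsys_def by simp
    moreover have "card V1 \<le> DIM(complex^'n)" using eigsys_card[OF e1] .
    ultimately have "DIM(complex^'n) - card V1 < m" using less.prems(2) by simp
    thus ?thesis using less.IH[OF _ e1 refl] by blast
  qed
qed

lemma spectral:
  fixes A :: "complex^'n::finite^'n"
  assumes h: "adjointM A = A"
  shows "\<exists>V. eigsys A V \<and> (\<forall>x. (\<forall>v\<in>V. cinner v x = 0) \<longrightarrow> x = 0)"
  using spectral_aux[OF h, of "{}"] by (simp add: eigsys_def)



lemma mv_sum: "A *v (sum f S) = (\<Sum>s\<in>S. A *v f s)"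
  by (induction S rule: infinite_finite_induct) (auto simp: matrix_vector_right_distrib)

lemma eig_expand:
  assumes e: "eigsys A V" and c: "\<forall>x. (\<forall>v\<in>V. cinner v x = 0) \<longrightarrow> x = 0"
  shows "x = (\<Sum>v\<in>V. cinner v x *s v)"
proof -
  have fin: "finite V" using e eigsys_def by blast
  have "cinner w (x - (\<Sum>v\<in>V. cinner v x *s v)) = 0" if w: "w \<in> V" for w
  proof -
    have "(\<Sum>v\<in>V. cinner w (cinner v x *s v)) = (\<Sum>v\<in>V. if v = w then cinner w x else 0)"
    proof (intro sum.cong refl)
      fix v assume v: "v \<in> V"
      show "cinner w (cinner v x *s v) = (if v = w then cinner w x else 0)"
        using e v w unfolding eigsys_def by (auto simp: cinner_scale_right)
    qed
    also have "\<dots> = cinner w x" using fin w by simp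
    finally show ?thesis by (simp add: cinner_diff_right cinner_sum_right)
  qed
  hence "x - (\<Sum>v\<in>V. cinner v x *s v) = 0" using c by blast
  thus ?thesis by simp
qed

definition sqm :: "(complex^'n::finite) set \<Rightarrow> (complex^'n \<Rightarrow> real) \<Rightarrow> complex^'n^'n" where
  "sqm V f = (\<chi> i j. \<Sum>v\<in>V. complex_of_real (f v) * v$i * cnj (v$j))"

lemma sqm_mv: "sqm V f *v x = (\<Sum>v\<in>V. (complex_of_real (f v) * cinner v x) *s v)"
proof -
  have "(sqm V f *v x) $ i = (\<Sum>v\<in>V. (complex_of_real (f v) * cinner v x) *s v) $ i" for i
  proof -
    have "(sqm V f *v x) $ i = (\<Sum>j\<in>UNIV. \<Sum>v\<in>V. complex_of_real (f v) * v$i * cnj (v$j) * x$j)"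
      by (simp add: sqm_def matrix_vector_mult_def sum_distrib_right)
    also have "\<dots> = (\<Sum>v\<in>V. \<Sum>j\<in>UNIV. complex_of_real (f v) * v$i * cnj (v$j) * x$j)"
      by (rule sum.swap)
    also have "\<dots> = (\<Sum>v\<in>V. (complex_of_real (f v) * cinner v x) * v$i)"
      by (simp add: cinner_def sum_distrib_left sum_distrib_right) (simp add: algebra_simps)
    also have "\<dots> = (\<Sum>v\<in>V. (complex_of_real (f v) * cinner v x) *s v) $ i"
      by (simp add: sum_component vector_scalar_mult_def)
    finally show ?thesis .
  qed
  thus ?thesis by (simp add: vec_eq_iff)
qed

lemma sqm_herm: "adjointM (sqm V f) = sqm V f"
  by (simp add: adjointM_def sqm_def vec_eq_iff cnj_sum mult.commute mult.left_commute)

lemma sqm_on_eig: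
  assumes e: "eigsys A V" and w: "w \<in> V"
  shows "sqm V f *v w = complex_of_real (f w) *s w"
proof -
  have fin: "finite V" using e eigsys_def by blast
  have "sqm V f *v w = (\<Sum>v\<in>V. if v = w then complex_of_real (f w) *s w else 0)"
    unfolding sqm_mv
  proof (intro sum.cong refl)
    fix v assume v: "v \<in> V"
    show "(complex_of_real (f v) * cinner v w) *s v = (if v = w then complex_of_real (f w) *s w else 0)"
    proof (cases "v = w")
      case True
      have "cinner w w = 1" using e w unfolding eigsys_def by blast
      then show ?thesis using True by simp
    next
      case False
      have "cinner v w = 0" using e v w False unfolding eigsys_def by blast
      then show ?thesis using False by simp
    qed
  qed
  also have "\<dots> = complex_of_real (f w) *s w" using fin w by simp
  finally show ?thesis .
qed

lemma eig_matrix: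
  assumes e: "eigsys A V" and c: "\<forall>x. (\<forall>v\<in>V. cinner v x = 0) \<longrightarrow> x = 0"
  shows "A = sqm V (\<lambda>v. Re (cinner v (A *v v)))"
proof -
  have "A *v x = sqm V (\<lambda>v. Re (cinner v (A *v v))) *v x" for x
  proof -
    have "A *v x = A *v (\<Sum>v\<in>V. cinner v x *s v)" using eig_expand[OF e c, of x] by (rule arg_cong)
    also have "\<dots> = (\<Sum>v\<in>V. cinner v x *s (A *v v))" by (simp add: mv_sum mv_scale)
    also have "\<dots> = (\<Sum>v\<in>V. (complex_of_real (Re (cinner v (A *v v))) * cinner v x) *s v)"
    proof (intro sum.cong refl)
      fix v assume "v \<in> V"
      hence Av: "A *v v = complex_of_real (Re (cinner v (A *v v))) *s v" using e eigsys_def by blast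
      define l where "l = complex_of_real (Re (cinner v (A *v v)))"
      have Av': "A *v v = l *s v" unfolding l_def by (rule Av)
      have "cinner v x *s (A *v v) = (l * cinner v x) *s v"
        unfolding Av' by (simp add: vector_smult_assoc mult.commute)
      thus "cinner v x *s (A *v v) = (complex_of_real (Re (cinner v (A *v v))) * cinner v x) *s v"
        unfolding l_def .
    qed
    finally show ?thesis by (simp add: sqm_mv)
  qed
  thus ?thesis unfolding matrix_eq by blast
qed

lemma sqm_mult:
  assumes e: "eigsys A V"
  shows "sqm V f ** sqm V g = sqm V (\<lambda>v. f v * g v)"
proof -
  have "(sqm V f ** sqm V g) *v x = sqm V (\<lambda>v. f v * g v) *v x" for x
  proof -
    have "(sqm V f ** sqm V g) *v x = sqm V f *v (\<Sum>v\<in>V. (complex_of_real (g v) * cinner v x) *s v)"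
      by (simp add: matrix_vector_mul_assoc[symmetric] sqm_mv)
    also have "\<dots> = (\<Sum>v\<in>V. (complex_of_real (g v) * cinner v x) *s (sqm V f *v v))"
      by (simp add: mv_sum mv_scale)
    also have "\<dots> = (\<Sum>v\<in>V. (complex_of_real (f v * g v) * cinner v x) *s v)"
    proof (intro sum.cong refl)
      fix v assume "v \<in> V"
      thus "(complex_of_real (g v) * cinner v x) *s (sqm V f *v v) = (complex_of_real (f v * g v) * cinner v x) *s v"
        using sqm_on_eig[OF e] by (simp add: vector_scalar_mult_def vec_eq_iff mult.commute mult.left_commute)
    qed
    finally show ?thesis by (simp add: sqm_mv)
  qed
  thus ?thesis unfolding matrix_eq by blast
qed

lemma sqm_psd:
  assumes "\<And>v. v \<in> V \<Longrightarrow> f v \<ge> 0"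
  shows "psd (sqm V f)"
proof (rule psdI[OF sqm_herm])
  fix x
  have "cinner x (sqm V f *v x) = (\<Sum>v\<in>V. complex_of_real (f v) * (cinner v x * cinner x v))"
    by (simp add: sqm_mv cinner_sum_right cinner_scale_right mult.assoc)
  also have "\<dots> = (\<Sum>v\<in>V. complex_of_real (f v * (cmod (cinner v x))^2))"
  proof (intro sum.cong refl)
    fix v
    have "cinner v x * cinner x v = complex_of_real ((cmod (cinner v x))^2)"
      using complex_norm_square[of "cinner v x"] cinner_commute[of x v] by simp
    thus "complex_of_real (f v) * (cinner v x * cinner x v) = complex_of_real (f v * (cmod (cinner v x))^2)"
      by simp
  qed
  finally show "0 \<le> Re (cinner x (sqm V f *v x))"
    using assms by (simp add: Re_sum sum_nonneg)
qed

lemma trace_sqm: "eigsys A V \<Longrightarrow> trace (sqm V f) = complex_of_real (\<Sum>v\<in>V. f v)"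
proof -
  assume e: "eigsys A V"
  have "trace (sqm V f) = (\<Sum>v\<in>V. complex_of_real (f v) * cinner v v)"
    unfolding trace_def sqm_def cinner_def
    by (simp add: sum_distrib_left mult.assoc mult.commute mult.left_commute) (rule sum.swap)
  also have "\<dots> = (\<Sum>v\<in>V. complex_of_real (f v))" using e unfolding eigsys_def by simp
  finally show ?thesis by simp
qed

lemma cinner_axis_right: "cinner v (ax k) = cnj (v $ k)"
  using cinner_commute[of v "ax k"] cinner_axis[of k v] by simp

lemma trace_eig:
  assumes e: "eigsys A V" and c: "\<forall>x. (\<forall>v\<in>V. cinner v x = 0) \<longrightarrow> x = 0"
  shows "trace Y = (\<Sum>v\<in>V. cinner v (Y *v v))"
proof -
  have "trace Y = (\<Sum>k\<in>UNIV. (Y *v ax k) $ k)" by (simp add: trace_def mv_axis)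
  also have "\<dots> = (\<Sum>k\<in>UNIV. (\<Sum>v\<in>V. cnj (v $ k) * (Y *v v) $ k))"
  proof (intro sum.cong refl)
    fix k
    have "Y *v ax k = Y *v (\<Sum>v\<in>V. cinner v (ax k) *s v)" using eig_expand[OF e c, of "ax k"] by (rule arg_cong)
    also have "\<dots> = (\<Sum>v\<in>V. cnj (v $ k) *s (Y *v v))"
      by (simp add: mv_sum mv_scale cinner_axis_right)
    finally show "(Y *v ax k) $ k = (\<Sum>v\<in>V. cnj (v $ k) * (Y *v v) $ k)"
      by (simp add: sum_component vector_scalar_mult_def)
  qed
  also have "\<dots> = (\<Sum>v\<in>V. cinner v (Y *v v))"
    unfolding cinner_def by (rule sum.swap)
  finally show ?thesis .
qed

lemma gram_psd: "psd (adjointM Y ** Y)"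
proof (rule psdI)
  show "adjointM (adjointM Y ** Y) = adjointM Y ** Y" by (simp add: adjointM_mult)
  fix v
  have "cinner v ((adjointM Y ** Y) *v v) = cinner (Y *v v) (Y *v v)"
    using adjointM_cinner[of v "adjointM Y" "Y *v v"] by (simp add: matrix_vector_mul_assoc[symmetric])
  thus "0 \<le> Re (cinner v ((adjointM Y ** Y) *v v))" by (simp add: cinner_self)
qed

lemma psd_sqrt_exists:
  assumes "psd M"
  shows "psd (psd_sqrt M) \<and> psd_sqrt M ** psd_sqrt M = M"
proof -
  obtain V where e: "eigsys M V" and c: "\<forall>x. (\<forall>v\<in>V. cinner v x = 0) \<longrightarrow> x = 0"
    using spectral[OF psd_herm[OF assms]] by blast
  define lam where "lam v = Re (cinner v (M *v v))" for v
  have l0: "lam v \<ge> 0" for v using psdD[OF assms] lam_def by simp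
  define S where "S = sqm V (\<lambda>v. sqrt (lam v))"
  have pS: "psd S" unfolding S_def by (rule sqm_psd) (simp add: l0)
  have "S ** S = sqm V lam" unfolding S_def sqm_mult[OF e] using l0
    by (simp add: l0)
  also have "\<dots> = M"
  proof -
    have lamf: "lam = (\<lambda>v. Re (cinner v (M *v v)))" by (simp add: lam_def fun_eq_iff)
    show ?thesis unfolding lamf by (rule eig_matrix[OF e c, symmetric])
  qed
  finally have SS: "S ** S = M" .
  show ?thesis using psd_sqrt_eq[OF pS SS] pS SS by simp
qed

lemma trace_sqrt_ge: "Re (trace Y) \<le> Re (trace (psd_sqrt (adjointM Y ** Y)))"
proof -
  define M where "M = adjointM Y ** Y"
  have pM: "psd M" unfolding M_def by (rule gram_psd)
  obtain V where e: "eigsys M V" and c: "\<forall>x. (\<forall>v\<in>V. cinner v x = 0) \<longrightarrow> x = 0"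
    using spectral[OF psd_herm[OF pM]] by blast
  define lam where "lam v = Re (cinner v (M *v v))" for v
  have l0: "lam v \<ge> 0" for v using psdD[OF pM] lam_def by simp
  define S where "S = sqm V (\<lambda>v. sqrt (lam v))"
  have pS: "psd S" unfolding S_def by (rule sqm_psd) (simp add: l0)
  have "S ** S = sqm V lam" unfolding S_def sqm_mult[OF e] using l0
    by (simp add: l0)
  also have "\<dots> = M"
  proof -
    have lamf: "lam = (\<lambda>v. Re (cinner v (M *v v)))" by (simp add: lam_def fun_eq_iff)
    show ?thesis unfolding lamf by (rule eig_matrix[OF e c, symmetric])
  qed
  finally have SS: "S ** S = M" .
  have "psd_sqrt M = S" by (rule psd_sqrt_eq[OF pS SS])
  hence tS: "Re (trace (psd_sqrt M)) = (\<Sum>v\<in>V. sqrt (lam v))"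
    using trace_sqm[OF e] S_def by simp
  have "Re (trace Y) = (\<Sum>v\<in>V. Re (cinner v (Y *v v)))" by (simp add: trace_eig[OF e c] Re_sum)
  also have "\<dots> \<le> (\<Sum>v\<in>V. sqrt (lam v))"
  proof (rule sum_mono)
    fix v assume v: "v \<in> V"
    have "cinner v v = 1" using e v unfolding eigsys_def by blast
    hence "complex_of_real ((norm v)^2) = 1" by (simp only: cinner_self)
    hence "(norm v)^2 = 1" by (simp only: of_real_eq_1_iff)
    hence nv: "norm v = 1" using norm_ge_zero[of v] by (auto simp: power2_eq_1_iff)
    have "Re (cinner v (Y *v v)) \<le> cmod (cinner v (Y *v v))" by (rule complex_Re_le_cmod)
    also have "\<dots> \<le> norm v * norm (Y *v v)" by (rule cinner_cs)
    also have "\<dots> = sqrt ((norm (Y *v v))^2)" using nv by simp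
    also have "(norm (Y *v v))^2 = lam v"
    proof -
      have "cinner v (M *v v) = cinner (Y *v v) (Y *v v)"
        unfolding M_def using adjointM_cinner[of v "adjointM Y" "Y *v v"] by (simp add: matrix_vector_mul_assoc[symmetric])
      thus ?thesis by (simp add: lam_def cinner_self)
    qed
    finally show "Re (cinner v (Y *v v)) \<le> sqrt (lam v)" .
  qed
  finally show ?thesis using tS M_def by simp
qed



lemma sdelta1: "(\<Sum>k\<in>UNIV. (if (i::'n::finite) = k then a else 0) * g k) = (a::complex) * g i"
proof -
  have "(\<Sum>k\<in>UNIV. (if i = k then a else 0) * g k) = (\<Sum>k\<in>UNIV. if k = i then a * g k else 0)"
    by (intro sum.cong) auto
  thus ?thesis by simp
qed

lemma sdelta2: "(\<Sum>k\<in>UNIV. g k * (if k = (j::'n::finite) then a k else 0)) = g j * (a j::complex)"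
proof -
  have "(\<Sum>k\<in>UNIV. g k * (if k = j then a k else 0)) = (\<Sum>k\<in>UNIV. if k = j then g k * a k else 0)"
    by (intro sum.cong) auto
  thus ?thesis by simp
qed

lemma diag_left: "(diagM f ** A) $ i $ j = f i * A$i$j"
  unfolding matrix_matrix_mult_def diagM_def by (simp add: sdelta1)

lemma diag_right: "(A ** diagM f) $ i $ j = A$i$j * f j"
  unfolding matrix_matrix_mult_def diagM_def by (simp add: sdelta2)

lemma diag_mult: "diagM f ** diagM g = diagM (\<lambda>k. f k * g k)"
  by (simp add: vec_eq_iff diag_left) (simp add: diagM_def)

lemma adjoint_diag: "adjointM (diagM f) = diagM (\<lambda>k. cnj (f k))"
  by (simp add: adjointM_def diagM_def vec_eq_iff)

lemma psd_diag:
  assumes "\<And>k. 0 \<le> c k"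
  shows "psd (diagM (\<lambda>k. complex_of_real (c k)))"
proof (rule psdI)
  show "adjointM (diagM (\<lambda>k. complex_of_real (c k))) = diagM (\<lambda>k. complex_of_real (c k))"
    by (simp add: adjoint_diag)
  fix v :: "complex^'a"
  have mv: "diagM (\<lambda>k. complex_of_real (c k)) *v v = (\<chi> i. complex_of_real (c i) * v$i)"
  proof -
    have "(diagM (\<lambda>k. complex_of_real (c k)) *v v) $ i = complex_of_real (c i) * v$i" for i
      unfolding matrix_vector_mult_def diagM_def by (simp add: sdelta1)
    thus ?thesis by (simp add: vec_eq_iff)
  qed
  have "cinner v (diagM (\<lambda>k. complex_of_real (c k)) *v v) = (\<Sum>i\<in>UNIV. complex_of_real (c i * (cmod (v$i))^2))"
    unfolding mv cinner_def
  proof (intro sum.cong refl)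
    fix i
    show "cnj (v $ i) * (\<chi> i. complex_of_real (c i) * v $ i) $ i = complex_of_real (c i * (cmod (v $ i))\<^sup>2)"
      using complex_norm_square[of "v$i"] by (simp add: mult.commute mult.left_commute)
  qed
  thus "0 \<le> Re (cinner v (diagM (\<lambda>k. complex_of_real (c k)) *v v))"
    using assms by (simp add: Re_sum sum_nonneg)
qed

lemma psd_sqrt_diag:
  assumes "\<And>k. 0 \<le> c k"
  shows "psd_sqrt (diagM (\<lambda>k. complex_of_real (c k))) = diagM (\<lambda>k. complex_of_real (sqrt (c k)))"
proof (rule psd_sqrt_eq)
  show "psd (diagM (\<lambda>k. complex_of_real (sqrt (c k))))" by (rule psd_diag) (simp add: assms)
  show "diagM (\<lambda>k. complex_of_real (sqrt (c k))) ** diagM (\<lambda>k. complex_of_real (sqrt (c k))) =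
        diagM (\<lambda>k. complex_of_real (c k))"
    unfolding diag_mult using assms by (simp del: of_real_mult add: of_real_mult[symmetric])
qed

lemma fidelity_nonneg: "0 \<le> fidelity A B" by (simp add: fidelity_def)

lemma rank1_sqrt:
  fixes phi :: "complex^'n::finite"
  defines "P \<equiv> (\<chi> k l. phi$k * cnj (phi$l))"
  shows "psd_sqrt P = (\<chi> k l. complex_of_real (1 / norm phi) * (phi$k * cnj (phi$l)))"
proof (rule psd_sqrt_eq)
  define r where "r = 1 / norm phi"
  have r0: "r \<ge> 0" by (simp add: r_def)
  define S where "S = (\<chi> k l. complex_of_real r * (phi$k * cnj (phi$l)))"
  have Smv: "S *v x = (complex_of_real r * cinner phi x) *s phi" for x
    by (simp add: vec_eq_iff S_def matrix_vector_mult_def cinner_def sum_distrib_left algebra_simps)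
  have "psd S"
  proof (rule psdI)
    show "adjointM S = S" by (simp add: adjointM_def S_def vec_eq_iff mult.commute)
    fix v
    have "cinner v (S *v v) = complex_of_real r * (cinner phi v * cinner v phi)"
      by (simp add: Smv cinner_scale_right mult.commute mult.left_commute)
    also have "cinner phi v * cinner v phi = complex_of_real ((cmod (cinner phi v))^2)"
      using complex_norm_square[of "cinner phi v"] cinner_commute[of v phi] by simp
    finally show "0 \<le> Re (cinner v (S *v v))" using r0 by simp
  qed
  thus "psd (\<chi> k l. complex_of_real (1 / norm phi) * (phi$k * cnj (phi$l)))" using S_def r_def by simp
  have "S ** S = P"
  proof -
    have "(S ** S) *v x = P *v x" for x
    proof -
      have Pmv: "P *v x = cinner phi x *s phi"
        by (simp add: vec_eq_iff P_def matrix_vector_mult_def cinner_def sum_distrib_left algebra_simps)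
      have "(S ** S) *v x = S *v (S *v x)" by (simp add: matrix_vector_mul_assoc)
      also have "\<dots> = (complex_of_real r * cinner phi x * (complex_of_real r * cinner phi phi)) *s phi"
        by (simp add: Smv cinner_scale_right vector_smult_assoc mult.commute mult.left_commute)
      also have "complex_of_real r * cinner phi x * (complex_of_real r * cinner phi phi) = cinner phi x"
      proof (cases "phi = 0")
        case True then show ?thesis by simp
      next
        case False
        have "complex_of_real r * complex_of_real r * cinner phi phi = 1"
          using False by (simp add: cinner_self r_def power2_eq_square flip: of_real_mult)
        thus ?thesis by (simp add: algebra_simps)
      qed
      finally show ?thesis using Pmv by simp
    qed
    thus ?thesis unfolding matrix_eq by blast
  qed
  thus "(\<chi> k l. complex_of_real (1 / norm phi) * (phi$k * cnj (phi$l))) ** (\<chi> k l. complex_of_real (1 / norm phi) * (phi$k * cnj (phi$l))) = P"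
    using S_def r_def by simp
qed

lemma fid_pure:
  fixes a :: "'n::finite \<Rightarrow> complex"
  assumes p0: "\<And>k. 0 \<le> p k"
  shows "fidelity (diagM (\<lambda>k. complex_of_real (p k))) (\<chi> k l. a k * cnj (a l)) = (\<Sum>k\<in>UNIV. p k * (cmod (a k))^2)"
proof -
  define phi :: "complex^'n" where "phi = (\<chi> k. complex_of_real (sqrt (p k)) * a k)"
  have M: "diagM (\<lambda>k. complex_of_real (sqrt (p k))) ** (\<chi> k l. a k * cnj (a l)) ** diagM (\<lambda>k. complex_of_real (sqrt (p k)))
        = (\<chi> k l. phi$k * cnj (phi$l))"
    by (simp add: vec_eq_iff diag_left diag_right phi_def mult.commute mult.left_commute)
  have tr: "trace (\<chi> k l. complex_of_real (1 / norm phi) * (phi$k * cnj (phi$l))) = complex_of_real (norm phi)"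
  proof -
    have "trace (\<chi> k l. complex_of_real (1 / norm phi) * (phi$k * cnj (phi$l))) = complex_of_real (1 / norm phi) * cinner phi phi"
      by (simp add: trace_def cinner_def sum_distrib_left mult.commute)
    also have "\<dots> = complex_of_real (norm phi)" by (simp add: cinner_self power2_eq_square)
    finally show ?thesis .
  qed
  have "fidelity (diagM (\<lambda>k. complex_of_real (p k))) (\<chi> k l. a k * cnj (a l)) = (norm phi)^2"
    unfolding fidelity_def psd_sqrt_diag[OF p0] M rank1_sqrt tr by simp
  also have "\<dots> = (\<Sum>k\<in>UNIV. p k * (cmod (a k))^2)"
    using p0 by (simp add: norm_vec_sq phi_def norm_mult power_mult_distrib)
  finally show ?thesis .
qed

lemma fid_lower:
  fixes U :: "complex^'n::finite^'n"
  assumes c0: "\<And>k. 0 \<le> c k" and q0: "\<And>k. 0 \<le> q k"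
  defines "Y \<equiv> diagM (\<lambda>k. complex_of_real (sqrt (q k))) ** adjointM U ** diagM (\<lambda>k. complex_of_real (sqrt (c k)))"
  assumes Y0: "0 \<le> Re (trace Y)"
  shows "(Re (trace Y))^2 \<le> fidelity (diagM (\<lambda>k. complex_of_real (c k))) (U ** diagM (\<lambda>k. complex_of_real (q k)) ** adjointM U)"
proof -
  define Dc where "Dc = diagM (\<lambda>k. complex_of_real (sqrt (c k)))"
  define Dq where "Dq = diagM (\<lambda>k. complex_of_real (sqrt (q k)))"
  have DqDq: "Dq ** Dq = diagM (\<lambda>k. complex_of_real (q k))"
    unfolding Dq_def diag_mult using q0 by (simp flip: of_real_mult)
  have aDc: "adjointM Dc = Dc" unfolding Dc_def adjoint_diag by simp
  have aDq: "adjointM Dq = Dq" unfolding Dq_def adjoint_diag by simp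
  have "adjointM Y ** Y = Dc ** (U ** diagM (\<lambda>k. complex_of_real (q k)) ** adjointM U) ** Dc"
    unfolding Y_def Dc_def[symmetric] Dq_def[symmetric] adjointM_mult aDc aDq adjointM_adjointM
    by (simp add: matrix_mul_assoc DqDq[symmetric])
  hence "Re (trace Y) \<le> Re (trace (psd_sqrt (Dc ** (U ** diagM (\<lambda>k. complex_of_real (q k)) ** adjointM U) ** Dc)))"
    using trace_sqrt_ge[of Y] by simp
  hence "(Re (trace Y))^2 \<le> (Re (trace (psd_sqrt (Dc ** (U ** diagM (\<lambda>k. complex_of_real (q k)) ** adjointM U) ** Dc))))^2"
    using Y0 by (simp add: power_mono)
  thus ?thesis unfolding fidelity_def psd_sqrt_diag[OF c0] Dc_def .
qed

lemma trace_Y: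
  "trace (diagM (\<lambda>k. complex_of_real (sqrt (q k))) ** adjointM U ** diagM (\<lambda>k. complex_of_real (sqrt (c k))))
   = (\<Sum>k\<in>UNIV. complex_of_real (sqrt (q k) * sqrt (c k)) * cnj (U$k$k))"
  by (simp add: trace_def diag_left diag_right adjointM_def mult.commute mult.left_commute)



section \<open>Matrix exponential bounds\<close>

lemma mpow_bound:
  fixes A :: "'a::{real_normed_field,banach}^'n::finite^'n"
  assumes a: "\<And>i j. norm (A$i$j) \<le> a"
  shows "norm (mpow A m $ i $ j) \<le> (real CARD('n) * a)^m"
proof -
  have a0: "a \<ge> 0" using a[of i j] norm_ge_zero order_trans by blast
  show ?thesis
proof (induction m arbitrary: i j)
  case 0
  then show ?case using a0 by (simp add: mat_def)
next
  case (Suc m)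
  have "norm (mpow A (Suc m) $ i $ j) = norm (\<Sum>k\<in>UNIV. A$i$k * mpow A m $ k $ j)"
    by (simp add: matrix_matrix_mult_def)
  also have "\<dots> \<le> (\<Sum>k\<in>UNIV. norm (A$i$k * mpow A m $ k $ j))" by (rule norm_sum)
  also have "\<dots> \<le> (\<Sum>k\<in>(UNIV::'n set). a * (real CARD('n) * a)^m)"
  proof (intro sum_mono)
    fix k show "norm (A$i$k * mpow A m $ k $ j) \<le> a * (real CARD('n) * a)^m"
      unfolding norm_mult by (rule mult_mono) (use a Suc.IH a0 in auto)
  qed
  also have "\<dots> = (real CARD('n) * a)^(Suc m)" by (simp add: algebra_simps)
  finally show ?case .
qed
qed

lemma exp_series_summable: "summable (\<lambda>m. (x::real)^m / fact m)"
  using exp_converges[of x] by (simp add: sums_iff divide_inverse mult.commute)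

lemma exp_series_sums: "(\<lambda>m. (x::real)^m / fact m) sums exp x"
  using exp_converges[of x] by (simp add: divide_inverse mult.commute)

lemma mexp_summable:
  fixes A :: "'a::{real_normed_field,banach}^'n::finite^'n"
  assumes a: "\<And>i j. norm (A$i$j) \<le> a"
  shows "summable (\<lambda>m. norm (mpow A m $ i $ j / fact m))"
proof (rule summable_comparison_test[OF _ exp_series_summable[of "real CARD('n) * a"]])
  show "\<exists>N. \<forall>n\<ge>N. norm (norm (mpow A n $ i $ j / fact n)) \<le> (real CARD('n) * a)^n / fact n"
    using mpow_bound[OF a] by (auto simp: norm_divide intro!: divide_right_mono)
qed

lemma mexp_remainder:
  fixes A :: "'a::{real_normed_field,banach}^'n::finite^'n"
  assumes a: "\<And>i j. norm (A$i$j) \<le> a"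
  shows "norm (mexp A $ i $ j - mat 1 $ i $ j - A $ i $ j) \<le> (real CARD('n) * a)^2 * exp (real CARD('n) * a)"
proof -
  define x where "x = real CARD('n) * a"
  have a0: "0 \<le> a" using a[of i j] norm_ge_zero order_trans by blast
  have x0: "x \<ge> 0" by (simp add: x_def a0)
  define f where "f = (\<lambda>m. mpow A m $ i $ j / fact m)"
  have sf: "summable f" unfolding f_def by (rule summable_norm_cancel[OF mexp_summable[OF a]])
  have "mexp A $ i $ j = suminf f" by (simp add: mexp_def f_def)
  also have "\<dots> = (\<Sum>n. f (n + 2)) + sum f {..<2}" by (rule suminf_split_initial_segment[OF sf])
  also have "sum f {..<2} = mat 1 $ i $ j + A $ i $ j"
    by (simp add: f_def numeral_2_eq_2)
  finally have eq: "mexp A $ i $ j - mat 1 $ i $ j - A $ i $ j = (\<Sum>n. f (n + 2))" by simp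
  have sn: "summable (\<lambda>n. norm (f (n + 2)))"
    using mexp_summable[OF a] unfolding f_def by (rule summable_ignore_initial_segment)
  have "norm (\<Sum>n. f (n + 2)) \<le> (\<Sum>n. norm (f (n + 2)))" by (rule summable_norm[OF sn])
  also have "\<dots> \<le> (\<Sum>n. x^2 * (x^n / fact n))"
  proof (rule suminf_le)
    fix n
    have "norm (f (n + 2)) \<le> x^(n+2) / fact (n + 2)"
    proof -
      have "norm (f (n + 2)) = norm (mpow A (n+2) $ i $ j) / fact (n+2)"
        unfolding f_def by (simp only: norm_divide norm_fact)
      also have "\<dots> \<le> x^(n+2) / fact (n + 2)"
        unfolding x_def by (intro divide_right_mono mpow_bound[OF a]) simp
      finally show ?thesis .
    qed
    also have "\<dots> \<le> x^(n+2) / fact n"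
    proof (rule divide_left_mono)
      show "fact n \<le> (fact (n + 2) :: real)" by (rule fact_mono) simp
    qed (use x0 in auto)
    also have "\<dots> = x^2 * (x^n / fact n)" by (simp add: power_add power2_eq_square algebra_simps)
    finally show "norm (f (n + 2)) \<le> x^2 * (x^n / fact n)" .
  next
    show "summable (\<lambda>n. norm (f (n + 2)))" by (rule sn)
    show "summable (\<lambda>n. x^2 * (x^n / fact n))" by (intro summable_mult exp_series_summable)
  qed
  also have "\<dots> = x^2 * exp x" by (rule sums_unique[symmetric], rule sums_mult, rule exp_series_sums)
  finally show ?thesis unfolding eq x_def .
qed



lemma mm_add_r: "((X::'a::semiring_1^'n::finite^'n) + Y) ** Z = X ** Z + Y ** Z"
  by (simp add: matrix_matrix_mult_def vec_eq_iff distrib_right sum.distrib)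

lemma mm_scaleR_l: "((c::real) *\<^sub>R (X::real^'n::finite^'n)) ** Z = c *\<^sub>R (X ** Z)"
  by (simp add: matrix_matrix_mult_def vec_eq_iff sum_distrib_left mult.assoc)

lemma mm_scaleR_r: "(X::real^'n::finite^'n) ** ((c::real) *\<^sub>R Z) = c *\<^sub>R (X ** Z)"
  by (simp add: matrix_matrix_mult_def vec_eq_iff sum_distrib_left mult.left_commute)

lemma mm_zero_r: "(X::'a::semiring_1^'n::finite^'n) ** 0 = 0"
  by (simp add: matrix_matrix_mult_def vec_eq_iff)

lemma mm_sum_r: "(X::real^'n::finite^'n) ** (\<Sum>k\<in>S. f k) = (\<Sum>k\<in>S. X ** f k)"
  by (induction S rule: infinite_finite_induct) (auto simp: matrix_add_ldistrib mm_zero_r)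

lemma binom_step:
  fixes g :: "nat \<Rightarrow> 'v::real_vector"
  shows "(\<Sum>k\<le>N. (real (N choose k) * c^(N-k)) *\<^sub>R g (Suc k)) + c *\<^sub>R (\<Sum>k\<le>N. (real (N choose k) * c^(N-k)) *\<^sub>R g k)
       = (\<Sum>k\<le>Suc N. (real (Suc N choose k) * c^(Suc N - k)) *\<^sub>R g k)"
proof -
  have A: "c *\<^sub>R (\<Sum>k\<le>N. (real (N choose k) * c^(N-k)) *\<^sub>R g k) = (\<Sum>k\<le>Suc N. (real (N choose k) * c^(Suc N - k)) *\<^sub>R g k)"
  proof -
    have "c *\<^sub>R (\<Sum>k\<le>N. (real (N choose k) * c^(N-k)) *\<^sub>R g k) = (\<Sum>k\<le>N. (real (N choose k) * c^(Suc N - k)) *\<^sub>R g k)"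
      unfolding scaleR_sum_right
    proof (intro sum.cong refl)
      fix k assume "k \<in> {..N}"
      hence "Suc N - k = Suc (N - k)" by auto
      thus "c *\<^sub>R (real (N choose k) * c^(N-k)) *\<^sub>R g k = (real (N choose k) * c^(Suc N - k)) *\<^sub>R g k"
        by (simp add: algebra_simps)
    qed
    also have "\<dots> = (\<Sum>k\<le>Suc N. (real (N choose k) * c^(Suc N - k)) *\<^sub>R g k)"
      by simp
    finally show ?thesis .
  qed
  have B: "(\<Sum>k\<le>Suc N. (real (N choose k) * c^(Suc N - k)) *\<^sub>R g k)
      = c^(Suc N) *\<^sub>R g 0 + (\<Sum>k\<le>N. (real (N choose Suc k) * c^(N - k)) *\<^sub>R g (Suc k))"
    by (subst sum.atMost_Suc_shift) simp
  have C: "(\<Sum>k\<le>Suc N. (real (Suc N choose k) * c^(Suc N - k)) *\<^sub>R g k)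
      = c^(Suc N) *\<^sub>R g 0 + (\<Sum>k\<le>N. (real (Suc N choose Suc k) * c^(N - k)) *\<^sub>R g (Suc k))"
    by (subst sum.atMost_Suc_shift) simp
  have D: "(\<Sum>k\<le>N. (real (Suc N choose Suc k) * c^(N - k)) *\<^sub>R g (Suc k))
     = (\<Sum>k\<le>N. (real (N choose k) * c^(N-k)) *\<^sub>R g (Suc k)) + (\<Sum>k\<le>N. (real (N choose Suc k) * c^(N - k)) *\<^sub>R g (Suc k))"
    by (simp add: distrib_right scaleR_add_left sum.distrib)
  show ?thesis unfolding A B C D by (simp add: algebra_simps)
qed

lemma mpow_shift:
  fixes B :: "real^'n::finite^'n"
  shows "mpow (B + c *\<^sub>R mat 1) N = (\<Sum>k\<le>N. (real (N choose k) * c^(N-k)) *\<^sub>R mpow B k)"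
proof (induction N)
  case 0 then show ?case by simp
next
  case (Suc N)
  have "mpow (B + c *\<^sub>R mat 1) (Suc N) = (B + c *\<^sub>R mat 1) ** (\<Sum>k\<le>N. (real (N choose k) * c^(N-k)) *\<^sub>R mpow B k)"
    using Suc.IH by simp
  also have "\<dots> = (\<Sum>k\<le>N. (real (N choose k) * c^(N-k)) *\<^sub>R mpow B (Suc k)) + c *\<^sub>R (\<Sum>k\<le>N. (real (N choose k) * c^(N-k)) *\<^sub>R mpow B k)"
    by (simp add: mm_add_r mm_scaleR_l mm_sum_r mm_scaleR_r scaleR_add_right sum.distrib scaleR_sum_right mult.commute)
  also have "\<dots> = (\<Sum>k\<le>Suc N. (real (Suc N choose k) * c^(Suc N - k)) *\<^sub>R mpow B k)"
    by (rule binom_step)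
  finally show ?case .
qed

lemma entry_bound_exists: "\<exists>a. \<forall>i j. norm ((A::'a::real_normed_vector^'n::finite^'n)$i$j) \<le> a"
proof -
  have "norm (A$i$j) \<le> (\<Sum>i\<in>UNIV. \<Sum>j\<in>UNIV. norm (A$i$j))" for i j
  proof -
    have "norm (A$i$j) \<le> (\<Sum>j\<in>UNIV. norm (A$i$j))"
      by (rule member_le_sum) auto
    also have "\<dots> \<le> (\<Sum>i\<in>UNIV. \<Sum>j\<in>UNIV. norm (A$i$j))"
      by (rule member_le_sum[where f="\<lambda>i. \<Sum>j\<in>UNIV. norm (A$i$j)"]) (auto intro: sum_nonneg)
    finally show ?thesis .
  qed
  thus ?thesis by blast
qed

lemma mexp_shift:
  fixes B :: "real^'n::finite^'n"
  shows "mexp (B + c *\<^sub>R mat 1) $ i $ j = exp c * mexp B $ i $ j"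
proof -
  obtain a where a: "\<And>i j. norm (B$i$j) \<le> a" using entry_bound_exists by blast
  define f where "f = (\<lambda>k. mpow B k $ i $ j / fact k)"
  define g where "g = (\<lambda>m. c^m / fact m :: real)"
  have sf: "summable (\<lambda>k. norm (f k))" unfolding f_def by (rule mexp_summable[OF a])
  have sg: "summable (\<lambda>k. norm (g k))"
    unfolding g_def using exp_series_summable[of "\<bar>c\<bar>"] by (simp add: power_abs)
  have "exp c * mexp B $ i $ j = (\<Sum>k. g k) * (\<Sum>k. f k)"
    using exp_series_sums[of c] by (simp add: g_def f_def mexp_def sums_iff)
  also have "\<dots> = (\<Sum>k. \<Sum>l\<le>k. g l * f (k - l))" by (rule Cauchy_product[OF sg sf])
  also have "\<dots> = (\<Sum>k. mpow (B + c *\<^sub>R mat 1) k $ i $ j / fact k)"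
  proof (intro suminf_cong)
    fix k
    have "mpow (B + c *\<^sub>R mat 1) k $ i $ j / fact k = (\<Sum>l\<le>k. real (k choose l) * c^(k-l) * mpow B l $ i $ j / fact k)"
      by (simp add: mpow_shift sum_component sum_divide_distrib)
    also have "\<dots> = (\<Sum>l\<le>k. g (k - l) * f l)"
    proof (intro sum.cong refl)
      fix l assume "l \<in> {..k}"
      hence lk: "l \<le> k" by simp
      have "real (k choose l) = fact k / (fact l * fact (k - l))" using binomial_fact[OF lk] by simp
      thus "real (k choose l) * c^(k-l) * mpow B l $ i $ j / fact k = g (k - l) * f l"
        by (simp add: f_def g_def)
    qed
    also have "\<dots> = (\<Sum>l\<le>k. g l * f (k - l))"
      by (rule sum.reindex_bij_witness[where i="\<lambda>l. k - l" and j="\<lambda>l. k - l"]) auto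
    finally show "(\<Sum>l\<le>k. g l * f (k - l)) = mpow (B + c *\<^sub>R mat 1) k $ i $ j / fact k" by simp
  qed
  also have "\<dots> = mexp (B + c *\<^sub>R mat 1) $ i $ j" by (simp add: mexp_def)
  finally show ?thesis by simp
qed

lemma mpow_nonneg:
  fixes C :: "real^'n::finite^'n"
  assumes "\<And>i j. 0 \<le> C$i$j"
  shows "0 \<le> mpow C m $ i $ j"
  by (induction m arbitrary: i j) (auto simp: mat_def matrix_matrix_mult_def assms intro!: sum_nonneg)

lemma mexp_nonneg:
  fixes C :: "real^'n::finite^'n"
  assumes c: "\<And>i j. 0 \<le> C$i$j"
  shows "0 \<le> mexp C $ i $ j"
proof -
  obtain a where a: "\<And>i j. norm (C$i$j) \<le> a" using entry_bound_exists by blast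
  have "summable (\<lambda>m. mpow C m $ i $ j / fact m)"
    using summable_norm_cancel[OF mexp_summable[OF a]] by simp
  thus ?thesis unfolding mexp_def using mpow_nonneg[OF c] by (simp add: suminf_nonneg)
qed

lemma mexp_nonneg_offdiag:
  fixes B :: "real^'n::finite^'n"
  assumes off: "\<And>i j. i \<noteq> j \<Longrightarrow> 0 \<le> B$i$j"
  shows "0 \<le> mexp B $ i $ j"
proof -
  define c where "c = (\<Sum>k\<in>UNIV. \<bar>B$k$k\<bar>)"
  have ck: "\<bar>B$k$k\<bar> \<le> c" for k unfolding c_def by (rule member_le_sum) auto
  have "0 \<le> (B + c *\<^sub>R mat 1) $ i' $ j'" for i' j'
    using off[of i' j'] ck[of i'] by (auto simp: mat_def)
  hence "0 \<le> mexp (B + c *\<^sub>R mat 1) $ i $ j" by (rule mexp_nonneg)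
  hence "0 \<le> exp c * mexp B $ i $ j" by (simp add: mexp_shift)
  thus ?thesis by (simp add: zero_le_mult_iff)
qed



lemma diag_bounds:
  fixes p t d K Nn :: real and a :: complex
  assumes t0: "0 \<le> t" and tK: "K * t \<le> 1/2" and t1: "t \<le> 1" and K1: "1 \<le> K"
    and d0: "0 \<le> d" and dN: "d \<le> Nn" and p0: "0 \<le> p"
    and hp: "\<bar>p - (1 - d * t)\<bar> \<le> K * t^2"
    and ha: "cmod (a - (1 - \<i> * complex_of_real (d * t))) \<le> K * t^2"
  shows "0 \<le> Re a" "1 - d * t - 5 * K * t^2 \<le> p * (Re a)^2"
    "p * (cmod a)^2 \<le> 1 - d * t + (K + 2 * (3 * K + (Nn + K)^2)) * t^2"
proof -
  define r where "r = a - (1 - \<i> * complex_of_real (d * t))"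
  have Rea: "Re a = 1 + Re r" and Ima: "Im a = - (d * t) + Im r" by (simp_all add: r_def)
  have Rer: "\<bar>Re r\<bar> \<le> K * t^2" using ha abs_Re_le_cmod order_trans r_def by blast
  have Imr: "\<bar>Im r\<bar> \<le> K * t^2" using ha abs_Im_le_cmod order_trans r_def by blast
  have Kt2: "K * t^2 \<le> t / 2"
  proof -
    have "K * t^2 = (K * t) * t" by (simp add: power2_eq_square)
    also have "\<dots> \<le> (1/2) * t" by (rule mult_right_mono[OF tK t0])
    finally show ?thesis by simp
  qed
  have Kt2': "K * t^2 \<le> 1/2" using Kt2 t1 by linarith
  have K0: "0 \<le> K * t^2" using K1 by simp
  have ReaL: "1 - K * t^2 \<le> Re a" using Rea Rer by linarith
  show "0 \<le> Re a" using ReaL Kt2' by linarith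
  have sq1: "1 - 2 * (K * t^2) \<le> (Re a)^2"
  proof -
    have e: "(1 - K * t^2)^2 = 1 - 2 * (K * t^2) + (K * t^2)^2" by (simp add: power2_eq_square algebra_simps)
    have "1 - 2 * (K * t^2) \<le> (1 - K * t^2)^2" unfolding e using zero_le_power2[of "K * t^2"] by linarith
    also have "\<dots> \<le> (Re a)^2" by (rule power_mono[OF ReaL]) (use Kt2' in linarith)
    finally show ?thesis .
  qed
  have pU: "p \<le> 1 - d * t + K * t^2" using hp by linarith
  have dt0: "0 \<le> d * t" using d0 t0 by simp
  have p2: "p \<le> 2" using pU Kt2' dt0 by linarith
  have "p * (1 - 2 * (K * t^2)) \<le> p * (Re a)^2" by (rule mult_left_mono[OF sq1 p0])
  moreover have "p * (2 * (K * t^2)) \<le> 2 * (2 * (K * t^2))" by (rule mult_right_mono[OF p2]) (use K0 in simp)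
  moreover have "1 - d * t - K * t^2 \<le> p" using hp by linarith
  ultimately show "1 - d * t - 5 * K * t^2 \<le> p * (Re a)^2" by (simp add: algebra_simps)
  define A where "A = 3 * K + (Nn + K)^2"
  have ReaU: "Re a \<le> 1 + K * t^2" using Rea Rer by linarith
  have Re2: "(Re a)^2 \<le> 1 + 3 * K * t^2"
  proof -
    have "(Re a)^2 \<le> (1 + K * t^2)^2" by (rule power_mono[OF ReaU]) (use ReaL Kt2' in linarith)
    also have "\<dots> = 1 + 2 * (K * t^2) + (K * t^2) * (K * t^2)" by (simp add: power2_eq_square algebra_simps)
    also have "(K * t^2) * (K * t^2) \<le> 1 * (K * t^2)" by (rule mult_right_mono) (use Kt2' K0 in linarith)+
    finally show ?thesis by simp
  qed
  have Im_abs: "\<bar>Im a\<bar> \<le> (Nn + K) * t"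
  proof -
    have "\<bar>Im a\<bar> \<le> d * t + K * t^2" using Ima Imr dt0 by linarith
    also have "d * t \<le> Nn * t" by (rule mult_right_mono[OF dN t0])
    also have "K * t^2 \<le> K * t"
    proof -
      have "t^2 \<le> t" using t0 t1 by (simp add: power2_eq_square mult_le_cancel_right1 mult_left_le_one_le)
      thus ?thesis using K1 by (simp add: mult_left_mono)
    qed
    finally show ?thesis by (simp add: algebra_simps)
  qed
  have Im2: "(Im a)^2 \<le> (Nn + K)^2 * t^2"
  proof -
    have "(Im a)^2 = \<bar>Im a\<bar>^2" by simp
    also have "\<dots> \<le> ((Nn + K) * t)^2" by (rule power_mono[OF Im_abs]) simp
    finally show ?thesis by (simp add: power_mult_distrib)
  qed
  have c2: "(cmod a)^2 \<le> 1 + A * t^2"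
    using Re2 Im2 unfolding A_def cmod_power2 by (simp add: algebra_simps)
  have A0: "0 \<le> A" unfolding A_def using K1 by simp
  have "p * (cmod a)^2 \<le> p * (1 + A * t^2)" by (rule mult_left_mono[OF c2 p0])
  also have "\<dots> = p + p * (A * t^2)" by (simp add: algebra_simps)
  also have "p * (A * t^2) \<le> 2 * (A * t^2)" by (rule mult_right_mono[OF p2]) (use A0 in simp)
  finally show "p * (cmod a)^2 \<le> 1 - d * t + (K + 2 * (3 * K + (Nn + K)^2)) * t^2"
    using pU unfolding A_def by (simp add: algebra_simps)
qed

lemma off_bounds:
  fixes p t l K :: real and a :: complex
  assumes t0: "0 \<le> t" and tK: "K * t \<le> 1/2" and t1: "t \<le> 1" and K1: "1 \<le> K"
    and l0: "0 \<le> l" and l1: "l \<le> 1" and p0: "0 \<le> p"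
    and hp: "\<bar>p - t * l\<bar> \<le> K * t^2"
    and ha: "cmod (a - \<i> * complex_of_real (t * l)) \<le> K * t^2"
  shows "p * (cmod a)^2 \<le> 8 * t^2"
proof -
  have Kt2: "K * t^2 \<le> t / 2"
  proof -
    have "K * t^2 = (K * t) * t" by (simp add: power2_eq_square)
    also have "\<dots> \<le> (1/2) * t" by (rule mult_right_mono[OF tK t0])
    finally show ?thesis by simp
  qed
  have tl: "t * l \<le> t" using t0 l1 by (simp add: mult_left_le)
  have tl0: "0 \<le> t * l" using t0 l0 by simp
  have pU: "p \<le> 2 * t" using hp tl Kt2 by linarith
  have "cmod a \<le> cmod (\<i> * complex_of_real (t * l)) + cmod (a - \<i> * complex_of_real (t * l))"
    by (metis add.commute diff_add_cancel norm_triangle_ineq)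
  also have "cmod (\<i> * complex_of_real (t * l)) = t * l" using t0 l0 by (simp add: norm_mult)
  finally have aU: "cmod a \<le> 2 * t" using ha tl Kt2 t0 by linarith
  have "(cmod a)^2 \<le> (2 * t)^2" by (rule power_mono[OF aU]) simp
  hence "p * (cmod a)^2 \<le> (2 * t) * (2 * t)^2" by (intro mult_mono pU) (use t0 p0 in auto)
  also have "\<dots> = 8 * t^2 * t" by (simp add: power2_eq_square)
  also have "\<dots> \<le> 8 * t^2 * 1" by (rule mult_left_mono[OF t1]) simp
  finally show ?thesis by simp
qed



lemma O_from_bound:
  fixes f :: "real \<Rightarrow> real"
  assumes d: "0 < \<delta>" and b: "\<And>t. 0 < t \<Longrightarrow> t < \<delta> \<Longrightarrow> \<bar>f t\<bar> \<le> C * t^2"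
  shows "f \<in> O[at_right 0](\<lambda>t. t^2)"
proof (rule bigoI[where c=C])
  show "\<forall>\<^sub>F x in at_right 0. norm (f x) \<le> C * norm (x^2)"
    using eventually_at_right_real[OF d] by (rule eventually_mono) (use b in auto)
qed

definition Nn :: "'n::finite itself \<Rightarrow> real" where "Nn _ = real CARD('n)"
definition KK :: "'n::finite itself \<Rightarrow> real" where "KK x = (Nn x)^4 * exp ((Nn x)^2)"

lemma Nn_ge1: "1 \<le> Nn (TYPE('n::finite))"
  unfolding Nn_def using zero_less_card_finite[where 'a='n] by linarith

lemma KK_ge1: "1 \<le> KK (TYPE('n::finite))"
proof -
  have n: "1 \<le> Nn TYPE('n)" by (rule Nn_ge1)
  have "1 \<le> (Nn TYPE('n))^4" using n by (simp add: one_le_power)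
  moreover have "1 \<le> exp ((Nn TYPE('n))^2)" by simp
  ultimately have "1 * 1 \<le> (Nn TYPE('n))^4 * exp ((Nn TYPE('n))^2)" by (intro mult_mono) auto
  thus ?thesis unfolding KK_def by simp
qed

lemma rem_le:
  assumes t0: "0 \<le> t" and t1: "t \<le> 1"
  shows "(real CARD('n::finite) * (t * real CARD('n)))^2 * exp (real CARD('n) * (t * real CARD('n))) \<le> KK TYPE('n) * t^2"
proof -
  define n where "n = real CARD('n)"
  have n0: "0 \<le> n" by (simp add: n_def)
  have "t * (n * n) \<le> 1 * (n * n)" by (rule mult_right_mono[OF t1]) (simp add: n0)
  hence e: "exp (n * (t * n)) \<le> exp (n^2)"
    by (simp add: power2_eq_square algebra_simps)
  have "(n * (t * n))^2 * exp (n * (t * n)) \<le> (n * (t * n))^2 * exp (n^2)"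
    by (rule mult_left_mono[OF e]) simp
  also have "\<dots> = n^4 * exp (n^2) * t^2" by (simp add: power2_eq_square power4_eq_xxxx)
  finally show ?thesis unfolding KK_def Nn_def n_def .
qed

lemma deg_le:
  fixes E :: "'n::finite \<Rightarrow> 'n \<Rightarrow> bool"
  shows "real (degree E j) \<le> Nn TYPE('n)"
  unfolding degree_def Nn_def by (simp add: card_mono)

lemma lap_entry: "laplacian E $ i $ j = (if i = j then - real (degree E i) else if E i j then 1 else 0)"
  by (simp add: laplacian_def)

lemma lap_abs:
  fixes E :: "'n::finite \<Rightarrow> 'n \<Rightarrow> bool"
  shows "\<bar>laplacian E $ i $ j\<bar> \<le> Nn TYPE('n)"
  using deg_le[of E i] Nn_ge1[where 'n='n] by (auto simp: lap_entry)

lemma pC_nonneg: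
  fixes E :: "'n::finite \<Rightarrow> 'n \<Rightarrow> bool"
  assumes "0 \<le> t" shows "0 \<le> pC E t k j"
  unfolding pC_def by (rule mexp_nonneg_offdiag) (use assms in \<open>auto simp: lap_entry\<close>)

lemma pC_rem:
  fixes E :: "'n::finite \<Rightarrow> 'n \<Rightarrow> bool"
  assumes t0: "0 \<le> t" and t1: "t \<le> 1"
  shows "\<bar>pC E t k j - mat 1 $ k $ j - t * laplacian E $ k $ j\<bar> \<le> KK TYPE('n) * t^2"
proof -
  have a: "norm ((t *\<^sub>R laplacian E) $ i $ j') \<le> t * real CARD('n)" for i j'
    using lap_abs[of E i j'] t0 by (simp add: abs_mult Nn_def mult_left_mono)
  have "norm (mexp (t *\<^sub>R laplacian E) $ k $ j - mat 1 $ k $ j - (t *\<^sub>R laplacian E) $ k $ j)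
        \<le> (real CARD('n) * (t * real CARD('n)))^2 * exp (real CARD('n) * (t * real CARD('n)))"
    by (rule mexp_remainder[OF a])
  also have "\<dots> \<le> KK TYPE('n) * t^2" by (rule rem_le[OF t0 t1])
  finally show ?thesis by (simp add: pC_def)
qed

lemma alpha_rem:
  fixes E :: "'n::finite \<Rightarrow> 'n \<Rightarrow> bool"
  assumes t0: "0 \<le> t" and t1: "t \<le> 1"
  shows "cmod (alphaQ E t k j - mat 1 $ k $ j - \<i> * complex_of_real t * complex_of_real (laplacian E $ k $ j)) \<le> KK TYPE('n) * t^2"
proof -
  define Q :: "complex^'n^'n" where "Q = (\<chi> i j. \<i> * complex_of_real t * complex_of_real (laplacian E $ i $ j))"
  have a: "norm (Q $ i $ j') \<le> t * real CARD('n)" for i j'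
    using lap_abs[of E i j'] t0 by (simp add: Q_def norm_mult abs_mult Nn_def mult_left_mono)
  have "norm (mexp Q $ k $ j - mat 1 $ k $ j - Q $ k $ j)
        \<le> (real CARD('n) * (t * real CARD('n)))^2 * exp (real CARD('n) * (t * real CARD('n)))"
    by (rule mexp_remainder[OF a])
  also have "\<dots> \<le> KK TYPE('n) * t^2" by (rule rem_le[OF t0 t1])
  finally show ?thesis by (simp add: alphaQ_def UQ_def Q_def)
qed



definition CC :: "'n::finite itself \<Rightarrow> real" where
  "CC x = KK x + 2 * (3 * KK x + (Nn x + KK x)^2) + 8 * Nn x + 5 * KK x"

definition dl :: "'n::finite itself \<Rightarrow> real" where "dl x = 1 / (2 * KK x)"

lemma dl_pos: "0 < dl TYPE('n::finite)"
  using KK_ge1[where 'n='n] by (simp add: dl_def)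

lemma small_t:
  assumes "0 < t" "t < dl TYPE('n::finite)"
  shows "t \<le> 1" "KK TYPE('n) * t \<le> 1/2"
proof -
  have K1: "1 \<le> KK TYPE('n)" by (rule KK_ge1)
  have td: "t \<le> 1 / (2 * KK TYPE('n))" using assms(2) unfolding dl_def by simp
  have "KK TYPE('n) * t \<le> KK TYPE('n) * (1 / (2 * KK TYPE('n)))"
    by (rule mult_left_mono[OF td]) (use K1 in simp)
  also have "\<dots> = 1/2" using K1 by simp
  finally show kt: "KK TYPE('n) * t \<le> 1/2" .
  have "1 * t \<le> KK TYPE('n) * t" by (rule mult_right_mono[OF K1]) (use assms(1) in simp)
  thus "t \<le> 1" using kt by simp
qed

lemma Fj_formula:
  fixes E :: "'n::finite \<Rightarrow> 'n \<Rightarrow> bool"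
  assumes "0 \<le> t"
  shows "Fj E t j = (\<Sum>k\<in>UNIV. pC E t k j * (cmod (alphaQ E t k j))^2)"
  unfolding Fj_def ECj_def EQj_def
  by (rule fid_pure[where a="\<lambda>k. alphaQ E t k j", simplified]) (rule pC_nonneg[OF assms])

lemma diag_app:
  fixes E :: "'n::finite \<Rightarrow> 'n \<Rightarrow> bool"
  assumes t0: "0 < t" and td: "t < dl TYPE('n)"
  shows "0 \<le> Re (alphaQ E t j j)"
    "1 - real (degree E j) * t - 5 * KK TYPE('n) * t^2 \<le> pC E t j j * (Re (alphaQ E t j j))^2"
    "pC E t j j * (cmod (alphaQ E t j j))^2 \<le> 1 - real (degree E j) * t
        + (KK TYPE('n) + 2 * (3 * KK TYPE('n) + (Nn TYPE('n) + KK TYPE('n))^2)) * t^2"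
proof -
  have t1: "t \<le> 1" and tK: "KK TYPE('n) * t \<le> 1/2" using small_t[OF t0 td] by auto
  have hp: "\<bar>pC E t j j - (1 - real (degree E j) * t)\<bar> \<le> KK TYPE('n) * t^2"
    using pC_rem[OF less_imp_le[OF t0] t1, of E j j] by (simp add: lap_entry mat_def algebra_simps)
  have ha: "cmod (alphaQ E t j j - (1 - \<i> * complex_of_real (real (degree E j) * t))) \<le> KK TYPE('n) * t^2"
    using alpha_rem[OF less_imp_le[OF t0] t1, of E j j] by (simp add: lap_entry mat_def algebra_simps)
  note db = diag_bounds[OF less_imp_le[OF t0] tK t1 KK_ge1 _ deg_le pC_nonneg[OF less_imp_le[OF t0]] hp ha]
  show "0 \<le> Re (alphaQ E t j j)" using db(1) by simp
  show "1 - real (degree E j) * t - 5 * KK TYPE('n) * t^2 \<le> pC E t j j * (Re (alphaQ E t j j))^2"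
    using db(2) by simp
  show "pC E t j j * (cmod (alphaQ E t j j))^2 \<le> 1 - real (degree E j) * t
        + (KK TYPE('n) + 2 * (3 * KK TYPE('n) + (Nn TYPE('n) + KK TYPE('n))^2)) * t^2"
    using db(3) by simp
qed

lemma off_app:
  fixes E :: "'n::finite \<Rightarrow> 'n \<Rightarrow> bool"
  assumes t0: "0 < t" and td: "t < dl TYPE('n)" and kj: "k \<noteq> j"
  shows "pC E t k j * (cmod (alphaQ E t k j))^2 \<le> 8 * t^2"
proof -
  have t1: "t \<le> 1" and tK: "KK TYPE('n) * t \<le> 1/2" using small_t[OF t0 td] by auto
  define l :: real where "l = (if E k j then 1 else 0)"
  have hp: "\<bar>pC E t k j - t * l\<bar> \<le> KK TYPE('n) * t^2"
    using pC_rem[OF less_imp_le[OF t0] t1, of E k j] kj by (simp add: lap_entry mat_def l_def)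
  have ha: "cmod (alphaQ E t k j - \<i> * complex_of_real (t * l)) \<le> KK TYPE('n) * t^2"
    using alpha_rem[OF less_imp_le[OF t0] t1, of E k j] kj by (cases "E k j") (simp_all add: lap_entry mat_def l_def)
  show ?thesis
    by (rule off_bounds[OF less_imp_le[OF t0] tK t1 KK_ge1 _ _ pC_nonneg[OF less_imp_le[OF t0]] hp ha])
       (simp_all add: l_def)
qed

lemma Fj_bounds:
  fixes E :: "'n::finite \<Rightarrow> 'n \<Rightarrow> bool"
  assumes t0: "0 < t" and td: "t < dl TYPE('n)"
  shows "1 - real (degree E j) * t - CC TYPE('n) * t^2 \<le> Fj E t j"
        "Fj E t j \<le> 1 - real (degree E j) * t + CC TYPE('n) * t^2"
proof -
  have F: "Fj E t j = (\<Sum>k\<in>UNIV. pC E t k j * (cmod (alphaQ E t k j))^2)"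
    by (rule Fj_formula) (use t0 in simp)
  have nn: "0 \<le> pC E t k j * (cmod (alphaQ E t k j))^2" for k
    using pC_nonneg[of t E k j] t0 by simp
  have K1: "1 \<le> KK TYPE('n)" by (rule KK_ge1)
  have n1: "1 \<le> Nn TYPE('n)" by (rule Nn_ge1)
  have t2: "0 \<le> t^2" by simp
  note da = diag_app[OF t0 td, of E j]
  have "pC E t j j * (Re (alphaQ E t j j))^2 \<le> pC E t j j * (cmod (alphaQ E t j j))^2"
  proof (rule mult_left_mono)
    show "(Re (alphaQ E t j j))^2 \<le> (cmod (alphaQ E t j j))^2"
      using power_mono[OF abs_Re_le_cmod[of "alphaQ E t j j"], of 2] by simp
  qed (use pC_nonneg[of t E j j] t0 in simp)
  also have "\<dots> \<le> Fj E t j" unfolding F by (rule member_le_sum) (auto simp: nn)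
  finally have "1 - real (degree E j) * t - 5 * KK TYPE('n) * t^2 \<le> Fj E t j" using da(2) by linarith
  moreover have "5 * KK TYPE('n) * t^2 \<le> CC TYPE('n) * t^2"
    by (rule mult_right_mono[OF _ t2]) (use K1 n1 in \<open>simp add: CC_def\<close>)
  ultimately show "1 - real (degree E j) * t - CC TYPE('n) * t^2 \<le> Fj E t j" by linarith
  have "Fj E t j = pC E t j j * (cmod (alphaQ E t j j))^2 + (\<Sum>k\<in>UNIV - {j}. pC E t k j * (cmod (alphaQ E t k j))^2)"
    unfolding F by (simp add: sum.remove)
  also have "(\<Sum>k\<in>UNIV - {j}. pC E t k j * (cmod (alphaQ E t k j))^2) \<le> (\<Sum>k\<in>(UNIV::'n set) - {j}. 8 * t^2)"
    by (rule sum_mono) (use off_app[OF t0 td] in auto)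
  also have "\<dots> \<le> Nn TYPE('n) * (8 * t^2)"
  proof -
    have "real (card ((UNIV::'n set) - {j})) \<le> Nn TYPE('n)" unfolding Nn_def by (simp add: card_Diff_subset)
    thus ?thesis by (simp add: mult_right_mono)
  qed
  finally have "Fj E t j \<le> 1 - real (degree E j) * t
        + (KK TYPE('n) + 2 * (3 * KK TYPE('n) + (Nn TYPE('n) + KK TYPE('n))^2)) * t^2 + Nn TYPE('n) * (8 * t^2)"
    using da(3) by linarith
  moreover have "(KK TYPE('n) + 2 * (3 * KK TYPE('n) + (Nn TYPE('n) + KK TYPE('n))^2)) * t^2 + Nn TYPE('n) * (8 * t^2)
      \<le> CC TYPE('n) * t^2"
    using K1 t2 by (simp add: CC_def algebra_simps)
  ultimately show "Fj E t j \<le> 1 - real (degree E j) * t + CC TYPE('n) * t^2" by linarith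
qed



lemma vertex_prob: "(\<lambda>i. if i = j then 1 else 0) \<in> (prob_vecs :: ('n::finite \<Rightarrow> real) set)"
  unfolding prob_vecs_def by simp

lemma vertex_fid:
  fixes E :: "'n::finite \<Rightarrow> 'n \<Rightarrow> bool"
  shows "fidelity (ECl E t (\<lambda>i. if i = j then 1 else 0))
      (EQu E t (diagM (\<lambda>i. complex_of_real (if i = j then 1 else 0)))) = Fj E t j"
proof -
  have "ECl E t (\<lambda>i. if i = j then 1 else 0) = ECj E t j"
  proof -
    have "(\<Sum>i\<in>UNIV. pC E t k i * (if i = j then 1 else 0)) = pC E t k j" for k
    proof -
      have "(\<Sum>i\<in>UNIV. pC E t k i * (if i = j then 1 else 0)) = (\<Sum>i\<in>UNIV. if i = j then pC E t k i else 0)"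
        by (intro sum.cong) auto
      thus ?thesis by simp
    qed
    thus ?thesis unfolding ECl_def ECj_def by simp
  qed
  moreover have "EQu E t (diagM (\<lambda>i. complex_of_real (if i = j then 1 else 0))) = EQj E t j"
  proof -
    have "(UQ E t ** diagM (\<lambda>i. complex_of_real (if i = j then 1 else 0)) ** adjointM (UQ E t)) $ k $ l
          = alphaQ E t k j * cnj (alphaQ E t l j)" for k l
    proof -
      have "(UQ E t ** diagM (\<lambda>i. complex_of_real (if i = j then 1 else 0)) ** adjointM (UQ E t)) $ k $ l
          = (\<Sum>m\<in>UNIV. UQ E t $ k $ m * complex_of_real (if m = j then 1 else 0) * cnj (UQ E t $ l $ m))"
        unfolding matrix_matrix_mult_def[of "UQ E t ** _"] by (simp add: diag_right adjointM_def)
      also have "\<dots> = (\<Sum>m\<in>UNIV. if m = j then UQ E t $ k $ m * cnj (UQ E t $ l $ m) else 0)"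
        by (intro sum.cong) auto
      also have "\<dots> = alphaQ E t k j * cnj (alphaQ E t l j)" by (simp add: alphaQ_def)
      finally show ?thesis .
    qed
    thus ?thesis unfolding EQu_def EQj_def by (simp add: vec_eq_iff)
  qed
  ultimately show ?thesis by (simp add: Fj_def)
qed

lemma lower_all:
  fixes E :: "'n::finite \<Rightarrow> 'n \<Rightarrow> bool"
  assumes t0: "0 < t" and td: "t < dl TYPE('n)" and q: "q \<in> prob_vecs"
  shows "1 - real (Max (range (degree E))) * t - CC TYPE('n) * t^2
     \<le> fidelity (ECl E t q) (EQu E t (diagM (\<lambda>j. complex_of_real (q j))))"
proof -
  define m where "m = 1 - real (Max (range (degree E))) * t - CC TYPE('n) * t^2"
  have q0: "\<And>k. 0 \<le> q k" and qs: "(\<Sum>k\<in>UNIV. q k) = 1" using q unfolding prob_vecs_def by auto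
  define c where "c k = (\<Sum>j\<in>UNIV. pC E t k j * q j)" for k
  have p0: "\<And>k j. 0 \<le> pC E t k j" by (rule pC_nonneg) (use t0 in simp)
  have c0: "\<And>k. 0 \<le> c k" unfolding c_def using p0 q0 by (simp add: sum_nonneg)
  have cge: "pC E t k k * q k \<le> c k" for k
    unfolding c_def by (rule member_le_sum) (use p0 q0 in simp_all)
  define U where "U = UQ E t"
  define Y where "Y = diagM (\<lambda>k. complex_of_real (sqrt (q k))) ** adjointM U ** diagM (\<lambda>k. complex_of_real (sqrt (c k)))"
  have trY: "Re (trace Y) = (\<Sum>k\<in>UNIV. sqrt (q k) * sqrt (c k) * Re (alphaQ E t k k))"
    unfolding Y_def trace_Y by (simp add: Re_sum U_def alphaQ_def)
  have fidq: "fidelity (ECl E t q) (EQu E t (diagM (\<lambda>j. complex_of_real (q j))))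
       = fidelity (diagM (\<lambda>k. complex_of_real (c k))) (U ** diagM (\<lambda>k. complex_of_real (q k)) ** adjointM U)"
    unfolding ECl_def EQu_def c_def U_def ..
  show ?thesis
  proof (cases "m \<le> 0")
    case True then show ?thesis using fidelity_nonneg m_def by (metis order_trans)
  next
    case False
    hence m0: "0 < m" by simp
    have K1: "1 \<le> KK TYPE('n)" by (rule KK_ge1)
    have g: "sqrt m \<le> sqrt (pC E t k k) * Re (alphaQ E t k k)" for k
    proof -
      note da = diag_app[OF t0 td, of E k]
      have dk: "real (degree E k) \<le> real (Max (range (degree E)))" by simp
      have "real (degree E k) * t \<le> real (Max (range (degree E))) * t"
        by (rule mult_right_mono[OF dk]) (use t0 in simp)
      moreover have "5 * KK TYPE('n) * t^2 \<le> CC TYPE('n) * t^2"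
        by (rule mult_right_mono) (use K1 Nn_ge1[where 'n='n] in \<open>simp_all add: CC_def\<close>)
      ultimately have "m \<le> pC E t k k * (Re (alphaQ E t k k))^2" using da(2) unfolding m_def by linarith
      also have "\<dots> = (sqrt (pC E t k k) * Re (alphaQ E t k k))^2"
        using p0[of k k] by (simp add: power_mult_distrib)
      finally have "sqrt m \<le> sqrt ((sqrt (pC E t k k) * Re (alphaQ E t k k))^2)" by (rule real_sqrt_le_mono)
      also have "\<dots> = sqrt (pC E t k k) * Re (alphaQ E t k k)" using da(1) p0[of k k] by (simp add: abs_mult)
      finally show ?thesis .
    qed
    have trm: "q k * sqrt m \<le> sqrt (q k) * sqrt (c k) * Re (alphaQ E t k k)" for k
    proof -
      have ra: "0 \<le> Re (alphaQ E t k k)" using diag_app(1)[OF t0 td] .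
      have "sqrt (q k) * sqrt (pC E t k k) \<le> sqrt (c k)"
        using cge[of k] by (simp add: real_sqrt_mult[symmetric] mult.commute)
      hence "sqrt (q k) * (sqrt (q k) * sqrt (pC E t k k)) * Re (alphaQ E t k k) \<le> sqrt (q k) * sqrt (c k) * Re (alphaQ E t k k)"
        using ra q0[of k] by (intro mult_right_mono mult_left_mono) auto
      moreover have "sqrt (q k) * (sqrt (q k) * sqrt (pC E t k k)) * Re (alphaQ E t k k) = q k * (sqrt (pC E t k k) * Re (alphaQ E t k k))"
        using q0[of k] by (simp add: mult.assoc[symmetric])
      moreover have "q k * sqrt m \<le> q k * (sqrt (pC E t k k) * Re (alphaQ E t k k))"
        by (rule mult_left_mono[OF g q0])
      ultimately show ?thesis by linarith
    qed
    have "sqrt m = (\<Sum>k\<in>UNIV. q k * sqrt m)" using qs by (simp add: sum_distrib_right[symmetric])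
    also have "\<dots> \<le> Re (trace Y)" unfolding trY by (rule sum_mono[OF trm])
    finally have sY: "sqrt m \<le> Re (trace Y)" .
    have Y0: "0 \<le> Re (trace Y)" using sY m0 by (meson order_trans real_sqrt_ge_zero less_imp_le)
    have "m = (sqrt m)^2" using m0 by (simp add: less_imp_le)
    also have "\<dots> \<le> (Re (trace Y))^2" by (rule power_mono[OF sY]) (use m0 in simp)
    also have "\<dots> \<le> fidelity (diagM (\<lambda>k. complex_of_real (c k))) (U ** diagM (\<lambda>k. complex_of_real (q k)) ** adjointM U)"
      using fid_lower[where c=c and q=q and U=U, OF c0 q0] Y0 unfolding Y_def by blast
    finally show ?thesis unfolding fidq m_def .
  qed
qed



theorem mainTheorem2:
  fixes E :: "'n::finite \<Rightarrow> 'n \<Rightarrow> bool"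
  assumes "simple_graph E"
  shows "(\<forall>j. \<forall>t\<ge>0. Fj E t j = (\<Sum>k\<in>UNIV. pC E t k j * (cmod (alphaQ E t k j))^2))
    \<and> (\<forall>j. (\<lambda>t. DQC_cond E t j - real (degree E j) * t) \<in> O[at_right 0](\<lambda>t. t^2))
    \<and> (\<lambda>t. DQC E t - real (Max (range (degree E))) * t) \<in> O[at_right 0](\<lambda>t. t^2)
    \<and> (\<lambda>t. (\<Sum>j\<in>UNIV. DQC_cond E t j) / real CARD('n)
           - ((\<Sum>j\<in>UNIV. real (degree E j)) / real CARD('n)) * t) \<in> O[at_right 0](\<lambda>t. t^2)"
proof -
  define C where "C = CC TYPE('n)"
  have P1: "\<forall>j. \<forall>t\<ge>0. Fj E t j = (\<Sum>k\<in>UNIV. pC E t k j * (cmod (alphaQ E t k j))^2)"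
    using Fj_formula by blast
  have condb: "\<bar>DQC_cond E t j - real (degree E j) * t\<bar> \<le> C * t^2"
    if "0 < t" "t < dl TYPE('n)" for t j
    using Fj_bounds[OF that, of E j] unfolding DQC_cond_def C_def by linarith
  have P2: "\<forall>j. (\<lambda>t. DQC_cond E t j - real (degree E j) * t) \<in> O[at_right 0](\<lambda>t. t^2)"
  proof
    fix j
    show "(\<lambda>t. DQC_cond E t j - real (degree E j) * t) \<in> O[at_right 0](\<lambda>t. t^2)"
      by (rule O_from_bound[OF dl_pos[where 'n='n]]) (rule condb)
  qed
  obtain jm where jm: "degree E jm = Max (range (degree E))"
  proof -
    have "Max (range (degree E)) \<in> range (degree E)" by (rule Max_in) auto
    thus ?thesis using that by (metis rangeE)
  qed
  define f where "f t q = fidelity (ECl E t q) (EQu E t (diagM (\<lambda>j. complex_of_real (q j))))" for t q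
  have bdd: "bdd_below (f t ` prob_vecs)" for t
    unfolding f_def by (rule bdd_belowI[where m=0]) (auto simp: fidelity_nonneg)
  have ne: "(prob_vecs :: ('n \<Rightarrow> real) set) \<noteq> {}" using vertex_prob by blast
  have dqcb: "\<bar>DQC E t - real (Max (range (degree E))) * t\<bar> \<le> C * t^2"
    if t0: "0 < t" and td: "t < dl TYPE('n)" for t
  proof -
    have DQ: "DQC E t = 1 - (INF q\<in>prob_vecs. f t q)" unfolding DQC_def f_def ..
    have "(INF q\<in>prob_vecs. f t q) \<le> f t (\<lambda>i. if i = jm then 1 else 0)"
      by (rule cINF_lower[OF bdd vertex_prob])
    also have "\<dots> = Fj E t jm" unfolding f_def by (rule vertex_fid)
    also have "\<dots> \<le> 1 - real (Max (range (degree E))) * t + C * t^2"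
      using Fj_bounds(2)[OF t0 td, of E jm] jm C_def by simp
    finally have up: "(INF q\<in>prob_vecs. f t q) \<le> 1 - real (Max (range (degree E))) * t + C * t^2" .
    have lo: "1 - real (Max (range (degree E))) * t - C * t^2 \<le> (INF q\<in>prob_vecs. f t q)"
      by (rule cINF_greatest[OF ne]) (use lower_all[OF t0 td] in \<open>simp add: f_def C_def\<close>)
    show ?thesis using up lo DQ by linarith
  qed
  have P3: "(\<lambda>t. DQC E t - real (Max (range (degree E))) * t) \<in> O[at_right 0](\<lambda>t. t^2)"
    by (rule O_from_bound[OF dl_pos[where 'n='n]]) (rule dqcb)
  have avgb: "\<bar>(\<Sum>j\<in>UNIV. DQC_cond E t j) / real CARD('n)
           - ((\<Sum>j\<in>UNIV. real (degree E j)) / real CARD('n)) * t\<bar> \<le> C * t^2"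
    if t0: "0 < t" and td: "t < dl TYPE('n)" for t
  proof -
    have N0: "0 < real CARD('n)" by simp
    have "(\<Sum>j\<in>UNIV. DQC_cond E t j) / real CARD('n) - ((\<Sum>j\<in>UNIV. real (degree E j)) / real CARD('n)) * t
        = (\<Sum>j\<in>UNIV. DQC_cond E t j - real (degree E j) * t) / real CARD('n)"
      by (simp add: sum_subtractf sum_distrib_right diff_divide_distrib)
    also have "\<bar>\<dots>\<bar> = \<bar>\<Sum>j\<in>UNIV. DQC_cond E t j - real (degree E j) * t\<bar> / real CARD('n)"
      by simp
    also have "\<dots> \<le> (\<Sum>j\<in>(UNIV::'n set). C * t^2) / real CARD('n)"
    proof (rule divide_right_mono)
      show "\<bar>\<Sum>j\<in>UNIV. DQC_cond E t j - real (degree E j) * t\<bar> \<le> (\<Sum>j\<in>(UNIV::'n set). C * t^2)"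
        by (rule order_trans[OF sum_abs sum_mono]) (rule condb[OF t0 td])
    qed simp
    also have "\<dots> = C * t^2" using N0 by simp
    finally show ?thesis .
  qed
  have P4: "(\<lambda>t. (\<Sum>j\<in>UNIV. DQC_cond E t j) / real CARD('n)
           - ((\<Sum>j\<in>UNIV. real (degree E j)) / real CARD('n)) * t) \<in> O[at_right 0](\<lambda>t. t^2)"
    by (rule O_from_bound[OF dl_pos[where 'n='n]]) (rule avgb)
  show ?thesis using P1 P2 P3 P4 by blast
qed


end
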